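(* There exists $n_0$ such that for all $n\ge n_0$, $\mathrm{ex}(n,P_4,K_4)=\mathcal{N}(P_4,T_3(n))$; that is, $P_4$ is $4$-Tur\'an-good.
   Context: $P_4$ is the path on $4$ vertices. $T_3(n)$ is the complete $3$-partite graph on $n$ vertices with part sizes $\lfloor n/3\rfloor$ or $\lceil n/3\rceil$. For graphs $H,G$, $\mathcal{N}(H,G)$ is the number of subgraphs of $G$ isomorphic to $H$, and $\mathrm{ex}(n,H,F)$ is the maximum of $\mathcal{N}(H,G)$ over $F$-free graphs $G$ on $n$ vertices. A graph $H$ is $k$-Tur\'an-good if $\mathrm{ex}(n,H,K_k)=\mathcal{N}(H,T_{k-1}(n))$ for all sufficiently large $n$. *)

theory Defs
  imports Main
begin

type_synonym 'a sgraph = "'a set \<times> 'a set set"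

definition simple_graph :: "'a sgraph \<Rightarrow> bool" where
  "simple_graph G \<longleftrightarrow> finite (fst G) \<and> (\<forall>e\<in>snd G. card e = 2 \<and> e \<subseteq> fst G)"

definition graph_iso :: "'a sgraph \<Rightarrow> 'b sgraph \<Rightarrow> bool" where
  "graph_iso G H \<longleftrightarrow> (\<exists>f. bij_betw f (fst G) (fst H) \<and>
      (\<forall>u\<in>fst G. \<forall>v\<in>fst G. ({u, v} \<in> snd G \<longleftrightarrow> {f u, f v} \<in> snd H)))"

definition subgraphs :: "'a sgraph \<Rightarrow> 'a sgraph set" where
  "subgraphs G = {(W, F). W \<subseteq> fst G \<and> F \<subseteq> snd G \<and> (\<forall>e\<in>F. e \<subseteq> W)}"

definition count_copies :: "'b sgraph \<Rightarrow> 'a sgraph \<Rightarrow> nat" where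
  "count_copies H G = card {S \<in> subgraphs G. graph_iso S H}"

definition P4 :: "nat sgraph" where
  "P4 = ({0, 1, 2, 3}, {{0, 1}, {1, 2}, {2, 3}})"

definition complete_graph :: "nat \<Rightarrow> nat sgraph" where
  "complete_graph k = ({0..<k}, {e. \<exists>u v. u < k \<and> v < k \<and> u \<noteq> v \<and> e = {u, v}})"

text \<open>Tur\'an graph T_r(n) on vertex set {0..<n}: parts are residue classes mod r,
  hence of sizes floor(n/r) or ceil(n/r).\<close>
definition turan_graph :: "nat \<Rightarrow> nat \<Rightarrow> nat sgraph" where
  "turan_graph r n = ({0..<n},
     {e. \<exists>u v. u < n \<and> v < n \<and> u mod r \<noteq> v mod r \<and> e = {u, v}})"

text \<open>ex(n,H,F): max number of copies of H over F-free graphs on n vertices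
  (WLOG with vertex set {0..<n}).\<close>
definition gen_ex :: "nat \<Rightarrow> 'b sgraph \<Rightarrow> 'c sgraph \<Rightarrow> nat" where
  "gen_ex n H F = Max {count_copies H G | G :: nat sgraph.
      simple_graph G \<and> fst G = {0..<n} \<and> count_copies F G = 0}"

end

theory Submission
  imports Defs
begin

definition grel :: "nat \<Rightarrow> (nat \<Rightarrow> nat \<Rightarrow> bool) \<Rightarrow> bool" where
  "grel n R \<longleftrightarrow> (\<forall>x y. R x y \<longrightarrow> x < n \<and> y < n \<and> x \<noteq> y \<and> R y x)"

definition k4free :: "(nat \<Rightarrow> nat \<Rightarrow> bool) \<Rightarrow> bool" where
  "k4free R \<longleftrightarrow> \<not>(\<exists>a b c d. R a b \<and> R a c \<and> R a d \<and> R b c \<and> R b d \<and> R c d)"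

definition paths :: "(nat \<Rightarrow> nat \<Rightarrow> bool) \<Rightarrow> (nat \<times> nat \<times> nat \<times> nat) set" where
  "paths R = {(a,b,c,d). R a b \<and> R b c \<and> R c d \<and> a \<noteq> c \<and> b \<noteq> d \<and> a \<noteq> d}"

definition W :: "(nat \<Rightarrow> nat \<Rightarrow> bool) \<Rightarrow> nat" where
  "W R = card (paths R)"

lemma grelD:
  assumes "grel n R" "R x y"
  shows "x < n" "y < n" "x \<noteq> y" "R y x"
  using assms unfolding grel_def by blast+

lemma grel_irrefl: "grel n R \<Longrightarrow> \<not> R x x"
  using grelD(3) by blast

lemma paths_sub: "grel n R \<Longrightarrow> paths R \<subseteq> {..<n} \<times> {..<n} \<times> {..<n} \<times> {..<n}"
  unfolding paths_def by (auto dest: grelD)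

lemma finite_paths: "grel n R \<Longrightarrow> finite (paths R)"
  by (rule finite_subset[OF paths_sub]) auto

definition tv :: "nat \<times> nat \<times> nat \<times> nat \<Rightarrow> nat set" where
  "tv t = (case t of (a,b,c,d) \<Rightarrow> {a,b,c,d})"

definition Nei :: "nat \<Rightarrow> nat \<Rightarrow> (nat \<Rightarrow> nat \<Rightarrow> bool) \<Rightarrow> _" where
  "Nei u v R = {t \<in> paths R. u \<notin> tv t \<and> v \<notin> tv t}"
definition Pw :: "nat \<Rightarrow> nat \<Rightarrow> (nat \<Rightarrow> nat \<Rightarrow> bool) \<Rightarrow> _" where
  "Pw u v R = {t \<in> paths R. u \<in> tv t \<and> v \<notin> tv t}"
definition Both :: "nat \<Rightarrow> nat \<Rightarrow> (nat \<Rightarrow> nat \<Rightarrow> bool) \<Rightarrow> _" where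
  "Both u v R = {t \<in> paths R. u \<in> tv t \<and> v \<in> tv t}"

lemma W_split:
  assumes "grel n R"
  shows "W R = card (Nei u v R) + card (Pw u v R) + card (Pw v u R) + card (Both u v R)"
proof -
  have f: "finite (paths R)" using finite_paths[OF assms] .
  have "paths R = Nei u v R \<union> Pw u v R \<union> Pw v u R \<union> Both u v R"
    unfolding Nei_def Pw_def Both_def by blast
  moreover have "finite (Nei u v R)" "finite (Pw u v R)" "finite (Pw v u R)" "finite (Both u v R)"
    using f unfolding Nei_def Pw_def Both_def by auto
  ultimately have e: "paths R = Nei u v R \<union> Pw u v R \<union> Pw v u R \<union> Both u v R"
    and fs: "finite (Nei u v R)" "finite (Pw u v R)" "finite (Pw v u R)" "finite (Both u v R)"
    by auto
  have "card (Nei u v R \<union> Pw u v R \<union> Pw v u R \<union> Both u v R)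
     = card (Nei u v R \<union> Pw u v R \<union> Pw v u R) + card (Both u v R)"
    by (rule card_Un_disjoint) (use fs in \<open>auto simp: Nei_def Pw_def Both_def\<close>)
  also have "card (Nei u v R \<union> Pw u v R \<union> Pw v u R) = card (Nei u v R \<union> Pw u v R) + card (Pw v u R)"
    by (rule card_Un_disjoint) (use fs in \<open>auto simp: Nei_def Pw_def Both_def\<close>)
  also have "card (Nei u v R \<union> Pw u v R) = card (Nei u v R) + card (Pw u v R)"
    by (rule card_Un_disjoint) (use fs in \<open>auto simp: Nei_def Pw_def Both_def\<close>)
  finally show ?thesis unfolding W_def e by simp
qed

definition nb :: "(nat \<Rightarrow> nat \<Rightarrow> bool) \<Rightarrow> nat \<Rightarrow> nat set" where
  "nb R x = {y. R x y}"

definition ep :: "(nat \<Rightarrow> nat \<Rightarrow> bool) \<Rightarrow> nat set \<Rightarrow> nat set \<Rightarrow> nat" where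
  "ep R X Y = card {(x,y). x \<in> X \<and> y \<in> Y \<and> R x y}"

lemma nb_sub: "grel n R \<Longrightarrow> nb R x \<subseteq> {..<n}"
  unfolding nb_def by (auto dest: grelD)

lemma finite_nb: "grel n R \<Longrightarrow> finite (nb R x)"
  by (rule finite_subset[OF nb_sub]) auto

lemma card_offdiag:
  assumes "finite Y" "X \<subseteq> Y"
  shows "card {(x,y). x \<in> X \<and> y \<in> Y \<and> y \<noteq> x} = card X * (card Y - 1)"
proof -
  have fX: "finite X" using assms finite_subset by blast
  have "{(x,y). x \<in> X \<and> y \<in> Y \<and> y \<noteq> x} = Sigma X (\<lambda>x. Y - {x})" by auto
  hence "card {(x,y). x \<in> X \<and> y \<in> Y \<and> y \<noteq> x} = (\<Sum>x\<in>X. card (Y - {x}))"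
    using card_SigmaI[of X "\<lambda>x. Y - {x}"] fX assms by auto
  also have "\<dots> = (\<Sum>x\<in>X. card Y - 1)"
    by (rule sum.cong) (use assms in auto)
  finally show ?thesis by simp
qed

lemma card_offdiag2:
  assumes "finite Y" "X \<subseteq> Y"
  shows "card {(y,x). y \<in> Y \<and> x \<in> X \<and> y \<noteq> x} = card X * (card Y - 1)"
proof -
  have "{(y,x). y \<in> Y \<and> x \<in> X \<and> y \<noteq> x} = prod.swap ` {(x,y). x \<in> X \<and> y \<in> Y \<and> y \<noteq> x}"
    by auto
  moreover have "inj_on prod.swap A" for A :: "(nat \<times> nat) set" by (rule inj_on_inverseI[where g=prod.swap]) simp
  ultimately show ?thesis using card_offdiag[OF assms] by (simp add: card_image)
qed

lemma ep_sym:
  assumes "grel n R"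
  shows "ep R X Y = ep R Y X"
proof -
  have "{(x,y). x \<in> Y \<and> y \<in> X \<and> R x y} = prod.swap ` {(x,y). x \<in> X \<and> y \<in> Y \<and> R x y}"
    using grelD(4)[OF assms] by auto
  moreover have "inj_on prod.swap A" for A :: "(nat \<times> nat) set" by (rule inj_on_inverseI[where g=prod.swap]) simp
  ultimately show ?thesis unfolding ep_def by (simp add: card_image)
qed

lemma Both_count:
  assumes g: "grel n R" and uv: "u \<noteq> v" "\<not> R u v"
  defines "A \<equiv> nb R u" and "B \<equiv> nb R v"
  shows "card (Both u v R) = 2 * card (A \<inter> B) * (card A - 1) + 2 * card (A \<inter> B) * (card B - 1)
           + 2 * ep R A B"
proof -
  let ?C = "A \<inter> B"
  have irr: "\<And>x. \<not> R x x" using grel_irrefl[OF g] .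
  have sy: "\<And>x y. R x y \<Longrightarrow> R y x" using grelD(4)[OF g] .
  have vu: "\<not> R v u" using uv sy by blast
  have syeq: "R x y = R y x" for x y using sy by blast
  have fA: "finite A" and fB: "finite B" unfolding A_def B_def using finite_nb[OF g] by auto
  have mA: "x \<in> A \<longleftrightarrow> R u x" and mB: "x \<in> B \<longleftrightarrow> R v x" for x
    unfolding A_def B_def nb_def by auto
  define S1 where "S1 = (\<lambda>(x,y). (u,x,v,y)) ` {(x,y). x \<in> ?C \<and> y \<in> B \<and> y \<noteq> x}"
  define S2 where "S2 = (\<lambda>(x,y). (v,x,u,y)) ` {(x,y). x \<in> ?C \<and> y \<in> A \<and> y \<noteq> x}"
  define S3 where "S3 = (\<lambda>(x,y). (x,u,y,v)) ` {(x,y). x \<in> A \<and> y \<in> ?C \<and> x \<noteq> y}"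
  define S4 where "S4 = (\<lambda>(x,y). (x,v,y,u)) ` {(x,y). x \<in> B \<and> y \<in> ?C \<and> x \<noteq> y}"
  define S5 where "S5 = (\<lambda>(x,y). (u,x,y,v)) ` {(x,y). x \<in> A \<and> y \<in> B \<and> R x y}"
  define S6 where "S6 = (\<lambda>(x,y). (v,x,y,u)) ` {(x,y). x \<in> B \<and> y \<in> A \<and> R x y}"
  have eq: "Both u v R = S1 \<union> S2 \<union> S3 \<union> S4 \<union> S5 \<union> S6"
  proof
    show "Both u v R \<subseteq> S1 \<union> S2 \<union> S3 \<union> S4 \<union> S5 \<union> S6"
    proof
      fix t assume t: "t \<in> Both u v R"
      obtain a b c d where td: "t = (a,b,c,d)" by (cases t) auto
      have p: "R a b" "R b c" "R c d" "a \<noteq> c" "b \<noteq> d" "a \<noteq> d"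
        and ui: "u \<in> {a,b,c,d}" and vi: "v \<in> {a,b,c,d}"
        using t unfolding Both_def paths_def tv_def td by auto
      have cs: "(a = u \<and> c = v) \<or> (a = v \<and> c = u) \<or> (b = u \<and> d = v) \<or> (b = v \<and> d = u)
          \<or> (a = u \<and> d = v) \<or> (a = v \<and> d = u)"
        using ui vi p uv vu by auto
      have ps: "R b a" "R c b" "R d c" using p sy by auto
      from cs show "t \<in> S1 \<union> S2 \<union> S3 \<union> S4 \<union> S5 \<union> S6"
      proof (elim disjE conjE)
        assume h: "a = u" "c = v"
        have "t \<in> S1" unfolding S1_def td
          by (rule image_eqI[where x="(b,d)"]) (use h p ps in \<open>auto simp: mA mB\<close>)
        thus ?thesis by blast
      next
        assume h: "a = v" "c = u"
        have "t \<in> S2" unfolding S2_def td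
          by (rule image_eqI[where x="(b,d)"]) (use h p ps in \<open>auto simp: mA mB\<close>)
        thus ?thesis by blast
      next
        assume h: "b = u" "d = v"
        have "t \<in> S3" unfolding S3_def td
          by (rule image_eqI[where x="(a,c)"]) (use h p ps in \<open>auto simp: mA mB\<close>)
        thus ?thesis by blast
      next
        assume h: "b = v" "d = u"
        have "t \<in> S4" unfolding S4_def td
          by (rule image_eqI[where x="(a,c)"]) (use h p ps in \<open>auto simp: mA mB\<close>)
        thus ?thesis by blast
      next
        assume h: "a = u" "d = v"
        have "t \<in> S5" unfolding S5_def td
          by (rule image_eqI[where x="(b,c)"]) (use h p ps in \<open>auto simp: mA mB\<close>)
        thus ?thesis by blast
      next
        assume h: "a = v" "d = u"
        have "t \<in> S6" unfolding S6_def td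
          by (rule image_eqI[where x="(b,c)"]) (use h p ps in \<open>auto simp: mA mB\<close>)
        thus ?thesis by blast
      qed
    qed
    show "S1 \<union> S2 \<union> S3 \<union> S4 \<union> S5 \<union> S6 \<subseteq> Both u v R"
      using uv vu irr
      unfolding S1_def S2_def S3_def S4_def S5_def S6_def Both_def paths_def tv_def
      by (auto simp: mA mB syeq)
  qed
  have inj: "inj_on f X" if "\<And>x y x' y'. f (x,y) = f (x',y') \<Longrightarrow> x = x' \<and> y = y'" for f :: "nat \<times> nat \<Rightarrow> nat \<times> nat \<times> nat \<times> nat" and X
    using that unfolding inj_on_def by auto
  have fin: "finite {(x,y). x \<in> X \<and> y \<in> Y \<and> P x y}" if "finite X" "finite Y" for X Y P
    by (rule finite_subset[of _ "X \<times> Y"]) (use that in auto)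
  have o1: "card {(x,y). x \<in> ?C \<and> y \<in> B \<and> y \<noteq> x} = card ?C * (card B - 1)"
    by (rule card_offdiag[OF fB]) auto
  have o2: "card {(x,y). x \<in> ?C \<and> y \<in> A \<and> y \<noteq> x} = card ?C * (card A - 1)"
    by (rule card_offdiag[OF fA]) auto
  have o3: "card {(x,y). x \<in> A \<and> y \<in> ?C \<and> x \<noteq> y} = card ?C * (card A - 1)"
    by (rule card_offdiag2[OF fA]) auto
  have o4: "card {(x,y). x \<in> B \<and> y \<in> ?C \<and> x \<noteq> y} = card ?C * (card B - 1)"
    by (rule card_offdiag2[OF fB]) auto
  have c1: "card S1 = card ?C * (card B - 1)"
    unfolding S1_def o1[symmetric] by (rule card_image, rule inj) auto
  have c2: "card S2 = card ?C * (card A - 1)"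
    unfolding S2_def o2[symmetric] by (rule card_image, rule inj) auto
  have c3: "card S3 = card ?C * (card A - 1)"
    unfolding S3_def o3[symmetric] by (rule card_image, rule inj) auto
  have c4: "card S4 = card ?C * (card B - 1)"
    unfolding S4_def o4[symmetric] by (rule card_image, rule inj) auto
  have c5: "card S5 = ep R A B"
    unfolding S5_def ep_def by (rule card_image, rule inj) auto
  have c6': "card S6 = ep R B A"
    unfolding S6_def ep_def by (rule card_image, rule inj) auto
  have c6: "card S6 = ep R A B" using c6' ep_sym[OF g, of A B] by simp
  have fb: "finite (Both u v R)" using finite_paths[OF g] unfolding Both_def by auto
  have f1: "finite S1" "finite S2" "finite S3" "finite S4" "finite S5" "finite S6"
    using fb unfolding eq by auto
  have d: "(S1 \<union> S2 \<union> S3 \<union> S4 \<union> S5) \<inter> S6 = {}" "(S1 \<union> S2 \<union> S3 \<union> S4) \<inter> S5 = {}"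
     "(S1 \<union> S2 \<union> S3) \<inter> S4 = {}" "(S1 \<union> S2) \<inter> S3 = {}" "S1 \<inter> S2 = {}"
    using uv vu irr
    unfolding S1_def S2_def S3_def S4_def S5_def S6_def mA mB by auto
  have "card (Both u v R) = card S1 + card S2 + card S3 + card S4 + card S5 + card S6"
    unfolding eq using f1 d by (simp add: card_Un_disjoint)
  thus ?thesis using c1 c2 c3 c4 c5 c6 by simp
qed

definition clone :: "nat \<Rightarrow> nat \<Rightarrow> (nat \<Rightarrow> nat \<Rightarrow> bool) \<Rightarrow> (nat \<Rightarrow> nat \<Rightarrow> bool)" where
  "clone u v R = (\<lambda>a b. R (if a = v then u else a) (if b = v then u else b))"

context
  fixes n u v and R :: "nat \<Rightarrow> nat \<Rightarrow> bool"
  assumes g: "grel n R" and un: "u < n" and vn: "v < n" and uv: "u \<noteq> v" and nuv: "\<not> R u v"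
begin

lemma sy: "R x y \<Longrightarrow> R y x" using grelD(4)[OF g] .
lemma syeq: "R x y = R y x" using sy by blast
lemma irr: "\<not> R x x" using grel_irrefl[OF g] .
lemma nvu: "\<not> R v u" using nuv sy by blast

lemma clone_grel: "grel n (clone u v R)"
  unfolding grel_def clone_def using un vn g irr
  by (auto dest: grelD simp: syeq split: if_splits)

lemma clone_k4free: "k4free R \<Longrightarrow> k4free (clone u v R)"
proof -
  assume k: "k4free R"
  show ?thesis unfolding k4free_def
  proof
    assume "\<exists>a b c d. clone u v R a b \<and> clone u v R a c \<and> clone u v R a d \<and> clone u v R b c \<and> clone u v R b d \<and> clone u v R c d"
    then obtain a b c d where h: "clone u v R a b" "clone u v R a c" "clone u v R a d" "clone u v R b c" "clone u v R b d" "clone u v R c d"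
      by blast
    let ?s = "\<lambda>x. if x = v then u else x"
    have "R (?s a) (?s b)" "R (?s a) (?s c)" "R (?s a) (?s d)" "R (?s b) (?s c)" "R (?s b) (?s d)" "R (?s c) (?s d)"
      using h unfolding clone_def by auto
    thus False using k unfolding k4free_def by blast
  qed
qed

lemma clone_Nei: "Nei u v (clone u v R) = Nei u v R"
  unfolding Nei_def paths_def tv_def clone_def by auto

lemma clone_Pw: "Pw u v (clone u v R) = Pw u v R"
  unfolding Pw_def paths_def tv_def clone_def by auto

definition sw :: "nat \<Rightarrow> nat" where "sw x = (if x = u then v else if x = v then u else x)"
definition tsw :: "nat \<times> nat \<times> nat \<times> nat \<Rightarrow> nat \<times> nat \<times> nat \<times> nat" where
  "tsw t = (case t of (a,b,c,d) \<Rightarrow> (sw a, sw b, sw c, sw d))"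

lemma sw_sw: "sw (sw x) = x" unfolding sw_def using uv by auto
lemma tsw_tsw: "tsw (tsw t) = t" unfolding tsw_def by (cases t) (auto simp: sw_sw)

lemma clone_Pw2: "Pw v u (clone u v R) = tsw ` Pw u v R"
proof
  show "Pw v u (clone u v R) \<subseteq> tsw ` Pw u v R"
  proof
    fix t assume t: "t \<in> Pw v u (clone u v R)"
    obtain a b c d where td: "t = (a,b,c,d)" by (cases t) auto
    have m: "clone u v R a b" "clone u v R b c" "clone u v R c d" "a \<noteq> c" "b \<noteq> d" "a \<noteq> d"
      "v \<in> {a,b,c,d}" "u \<notin> {a,b,c,d}"
      using t unfolding td Pw_def paths_def tv_def by auto
    have e: "\<And>x. x \<noteq> u \<Longrightarrow> sw x = (if x = v then u else x)" unfolding sw_def by auto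
    have inj: "\<And>x y. x \<noteq> y \<Longrightarrow> sw x \<noteq> sw y" by (metis sw_sw)
    have r: "R (sw a) (sw b)" "R (sw b) (sw c)" "R (sw c) (sw d)"
      using m(1-3,8) unfolding clone_def by (auto simp: e)
    have "u \<in> {sw a, sw b, sw c, sw d}" using m(7) unfolding sw_def by auto
    moreover have "v \<notin> {sw a, sw b, sw c, sw d}" using m(8) uv unfolding sw_def by auto
    ultimately have "tsw t \<in> Pw u v R"
      using r inj m(4-6) unfolding td tsw_def Pw_def paths_def tv_def by auto
    thus "t \<in> tsw ` Pw u v R" using tsw_tsw by (metis image_eqI)
  qed
  show "tsw ` Pw u v R \<subseteq> Pw v u (clone u v R)"
  proof
    fix t assume "t \<in> tsw ` Pw u v R"
    then obtain s where s: "s \<in> Pw u v R" "t = tsw s" by blast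
    obtain a b c d where sd: "s = (a,b,c,d)" by (cases s) auto
    have m: "R a b" "R b c" "R c d" "a \<noteq> c" "b \<noteq> d" "a \<noteq> d"
      "u \<in> {a,b,c,d}" "v \<notin> {a,b,c,d}"
      using s unfolding sd Pw_def paths_def tv_def by auto
    have e: "\<And>x. x \<noteq> v \<Longrightarrow> (if sw x = v then u else sw x) = x" unfolding sw_def by auto
    have inj: "\<And>x y. x \<noteq> y \<Longrightarrow> sw x \<noteq> sw y" by (metis sw_sw)
    have r: "clone u v R (sw a) (sw b)" "clone u v R (sw b) (sw c)" "clone u v R (sw c) (sw d)"
      using m(1-3,8) unfolding clone_def by (auto simp: e)
    have "v \<in> {sw a, sw b, sw c, sw d}" using m(7) unfolding sw_def by auto
    moreover have "u \<notin> {sw a, sw b, sw c, sw d}" using m(8) uv unfolding sw_def by auto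
    ultimately show "t \<in> Pw v u (clone u v R)"
      using r inj m(4-6) s(2) unfolding sd tsw_def Pw_def paths_def tv_def by auto
  qed
qed

lemma card_clone_Pw2: "card (Pw v u (clone u v R)) = card (Pw u v R)"
  unfolding clone_Pw2 by (rule card_image) (metis inj_on_inverseI tsw_tsw)

lemma clone_nb_u: "nb (clone u v R) u = nb R u"
  unfolding nb_def clone_def using uv nuv irr by auto

lemma clone_nb_v: "nb (clone u v R) v = nb R u"
  unfolding nb_def clone_def using uv nuv irr by auto

lemma clone_ep: "ep (clone u v R) (nb R u) (nb R u) = ep R (nb R u) (nb R u)"
proof -
  have "v \<notin> nb R u" using nuv unfolding nb_def by auto
  hence "{(x,y). x \<in> nb R u \<and> y \<in> nb R u \<and> clone u v R x y} = {(x,y). x \<in> nb R u \<and> y \<in> nb R u \<and> R x y}"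
    unfolding clone_def by (auto split: if_splits)
  thus ?thesis unfolding ep_def by simp
qed

lemma clone_Both: "card (Both u v (clone u v R)) = 4 * card (nb R u) * (card (nb R u) - 1) + 2 * ep R (nb R u) (nb R u)"
proof -
  have g': "grel n (clone u v R)" by (rule clone_grel)
  have n': "\<not> clone u v R u v" unfolding clone_def using uv irr by auto
  show ?thesis using Both_count[OF g' uv n'] unfolding clone_nb_u clone_nb_v clone_ep by simp
qed

lemma W_clone: "W (clone u v R) = card (Nei u v R) + 2 * card (Pw u v R) + 4 * card (nb R u) * (card (nb R u) - 1) + 2 * ep R (nb R u) (nb R u)"
  using W_split[OF clone_grel, of u v] clone_Nei clone_Pw card_clone_Pw2 clone_Both by simp

end

lemma ep_Un1:
  assumes "finite X1" "finite X2" "finite Y" "X1 \<inter> X2 = {}"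
  shows "ep R (X1 \<union> X2) Y = ep R X1 Y + ep R X2 Y"
proof -
  have fin: "finite {(x,y). x \<in> X \<and> y \<in> Y \<and> R x y}" if "finite X" for X
    by (rule finite_subset[of _ "X \<times> Y"]) (use that assms in auto)
  have "{(x,y). x \<in> X1 \<union> X2 \<and> y \<in> Y \<and> R x y} = {(x,y). x \<in> X1 \<and> y \<in> Y \<and> R x y} \<union> {(x,y). x \<in> X2 \<and> y \<in> Y \<and> R x y}"
    by auto
  thus ?thesis unfolding ep_def using assms fin by (simp add: card_Un_disjoint disjoint_iff)
qed

lemma ep_Un2:
  assumes "finite Y1" "finite Y2" "finite X" "Y1 \<inter> Y2 = {}"
  shows "ep R X (Y1 \<union> Y2) = ep R X Y1 + ep R X Y2"
proof -
  have fin: "finite {(x,y). x \<in> X \<and> y \<in> Y \<and> R x y}" if "finite Y" for Y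
    by (rule finite_subset[of _ "X \<times> Y"]) (use that assms in auto)
  have "{(x,y). x \<in> X \<and> y \<in> Y1 \<union> Y2 \<and> R x y} = {(x,y). x \<in> X \<and> y \<in> Y1 \<and> R x y} \<union> {(x,y). x \<in> X \<and> y \<in> Y2 \<and> R x y}"
    by auto
  thus ?thesis unfolding ep_def using assms fin by (simp add: card_Un_disjoint disjoint_iff)
qed

lemma ep_le: "finite X \<Longrightarrow> finite Y \<Longrightarrow> ep R X Y \<le> card X * card Y"
proof -
  assume f: "finite X" "finite Y"
  have "{(x,y). x \<in> X \<and> y \<in> Y \<and> R x y} \<subseteq> X \<times> Y" by auto
  hence "card {(x,y). x \<in> X \<and> y \<in> Y \<and> R x y} \<le> card (X \<times> Y)"
    by (rule card_mono[rotated]) (use f in auto)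
  thus ?thesis unfolding ep_def by (simp add: card_cartesian_product)
qed

lemma sq_ge1:
  fixes x :: int
  assumes "x \<noteq> 0"
  shows "x * x \<ge> 1"
proof -
  have "0 < \<bar>x\<bar>" using assms by simp
  hence h: "1 \<le> \<bar>x\<bar>" by (simp only: int_one_le_iff_zero_less)
  have "1 * 1 \<le> \<bar>x\<bar> * \<bar>x\<bar>" by (rule mult_mono) (use h in auto)
  thus ?thesis by (simp add: abs_mult_self_eq)
qed

lemma arith_key:
  fixes c a b e :: nat
  assumes "e \<le> a * b" "\<not> (c = 0 \<and> a = 1 \<and> b = 1 \<and> e > 0)"
  shows "int c * (int c + int a - 1) + int c * (int c + int b - 1) + int e
     \<le> (int c + int a) * (int c + int a - 1) + (int c + int b) * (int c + int b - 1)"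
proof -
  have "int c * (int c + int a - 1) + int c * (int c + int b - 1) + int e
     = (int c + int a) * (int c + int a - 1) + (int c + int b) * (int c + int b - 1)
       - (int c * (int a + int b) + int a * int a + int b * int b - int a - int b) + int e"
    by (simp add: algebra_simps)
  moreover have "int e \<le> int c * (int a + int b) + int a * int a + int b * int b - int a - int b"
  proof (cases "c = 0")
    case True
    show ?thesis
    proof (cases "a = 1 \<and> b = 1")
      case True
      with assms \<open>c = 0\<close> show ?thesis by simp
    next
      case False
      note sq = sq_ge1
      have "(int a - int b) * (int a - int b) + (int a - 1) * (int a - 1) + (int b - 1) * (int b - 1) \<ge> 2"
      proof (cases "a = b")
        case True
        hence "int a - 1 \<noteq> 0" "int b - 1 \<noteq> 0" using False by auto
        moreover have "(int a - int b) * (int a - int b) \<ge> 0" by simp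
        ultimately show ?thesis using sq[of "int a - 1"] sq[of "int b - 1"] by linarith
      next
        case ne: False
        hence "int a - int b \<noteq> 0" by simp
        moreover have "int a - 1 \<noteq> 0 \<or> int b - 1 \<noteq> 0" using ne by auto
        ultimately show ?thesis using sq[of "int a - int b"] sq[of "int a - 1"] sq[of "int b - 1"]
          by (smt (verit) zero_le_square)
      qed
      hence "int a * int b \<le> int a * int a + int b * int b - int a - int b"
        by (simp add: algebra_simps)
      thus ?thesis using assms(1) \<open>c = 0\<close> by (simp add: of_nat_mult[symmetric] del: of_nat_mult)
    qed
  next
    case False
    hence "int c \<ge> 1" by simp
    hence "1 * (int a + int b) \<le> int c * (int a + int b)" by (intro mult_right_mono) auto
    hence "int c * (int a + int b) \<ge> int a + int b" by simp
    moreover have "(int a - int b) * (int a - int b) \<ge> 0" by simp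
    moreover have "int e \<le> int a * int b" using assms(1) by (metis of_nat_le_iff of_nat_mult)
    moreover have "int a * int b \<ge> 0" by simp
    ultimately show ?thesis by (simp add: algebra_simps)
  qed
  ultimately show ?thesis by linarith
qed

lemma int_mul_sub1: "x \<le> y \<Longrightarrow> int (x * (y - 1)) = int x * (int y - 1)"
  by (cases y) auto

lemma sym_ineq:
  assumes g: "grel n R" and un: "u < n" and vn: "v < n" and uv: "u \<noteq> v" and nuv: "\<not> R u v"
    and nbad: "\<not> (\<exists>x y. nb R u = {x} \<and> nb R v = {y} \<and> R x y)"
  shows "2 * W R \<le> W (clone u v R) + W (clone v u R)"
proof -
  define A where "A = nb R u"
  define B where "B = nb R v"
  define C where "C = A \<inter> B"
  define A' where "A' = A - B"
  define B' where "B' = B - A"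
  have nvu: "\<not> R v u" using nuv grelD(4)[OF g] by blast
  have W1: "W (clone u v R) = card (Nei u v R) + 2 * card (Pw u v R) + 4 * card A * (card A - 1) + 2 * ep R A A"
    unfolding A_def by (rule W_clone[OF g un vn uv nuv])
  have W2': "W (clone v u R) = card (Nei v u R) + 2 * card (Pw v u R) + 4 * card B * (card B - 1) + 2 * ep R B B"
    unfolding B_def by (rule W_clone[OF g vn un uv[symmetric] nvu])
  have "Nei v u R = Nei u v R" unfolding Nei_def by auto
  hence W2: "W (clone v u R) = card (Nei u v R) + 2 * card (Pw v u R) + 4 * card B * (card B - 1) + 2 * ep R B B"
    using W2' by simp
  have W0: "W R = card (Nei u v R) + card (Pw u v R) + card (Pw v u R) + card (Both u v R)"
    by (rule W_split[OF g])
  have Bo: "card (Both u v R) = 2 * card C * (card A - 1) + 2 * card C * (card B - 1) + 2 * ep R A B"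
    unfolding C_def A_def B_def by (rule Both_count[OF g uv nuv])
  have fA: "finite A" and fB: "finite B" unfolding A_def B_def using finite_nb[OF g] by auto
  have fC: "finite C" and fA': "finite A'" and fB': "finite B'" unfolding C_def A'_def B'_def using fA fB by auto
  have dA: "A = C \<union> A'" "C \<inter> A' = {}" and dB: "B = C \<union> B'" "C \<inter> B' = {}"
    unfolding C_def A'_def B'_def by auto
  have cA: "card A = card C + card A'" unfolding dA(1) using fC fA' dA(2) by (simp add: card_Un_disjoint)
  have cB: "card B = card C + card B'" unfolding dB(1) using fC fB' dB(2) by (simp add: card_Un_disjoint)
  have es: "ep R X Y = ep R Y X" for X Y using ep_sym[OF g] .
  have eAA: "ep R A A = ep R C C + 2 * ep R C A' + ep R A' A'"
    unfolding dA(1) using fC fA' dA(2) es[of A' C]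
    by (simp add: ep_Un1 ep_Un2)
  have eBB: "ep R B B = ep R C C + 2 * ep R C B' + ep R B' B'"
    unfolding dB(1) using fC fB' dB(2) es[of B' C]
    by (simp add: ep_Un1 ep_Un2)
  have eAB: "ep R A B = ep R C C + ep R C B' + ep R C A' + ep R A' B'"
    unfolding dA(1) dB(1) using fC fB' fA' dB(2) dA(2) es[of A' C]
    by (simp add: ep_Un1 ep_Un2)
  have ele: "ep R A' B' \<le> card A' * card B'" by (rule ep_le[OF fA' fB'])
  have nb2: "\<not> (card C = 0 \<and> card A' = 1 \<and> card B' = 1 \<and> ep R A' B' > 0)"
  proof
    assume h: "card C = 0 \<and> card A' = 1 \<and> card B' = 1 \<and> ep R A' B' > 0"
    hence "C = {}" using fC by simp
    hence "A = A'" "B = B'" using dA dB by auto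
    obtain x where x: "A' = {x}" using h card_1_singletonE by blast
    obtain y where y: "B' = {y}" using h card_1_singletonE by blast
    have "{(a,b). a \<in> A' \<and> b \<in> B' \<and> R a b} \<noteq> {}" using h unfolding ep_def by (metis card.empty less_irrefl)
    hence "R x y" using x y by auto
    thus False using nbad x y \<open>A = A'\<close> \<open>B = B'\<close> unfolding A_def B_def by blast
  qed
  have key: "int (card C) * (int (card C) + int (card A') - 1) + int (card C) * (int (card C) + int (card B') - 1) + int (ep R A' B')
     \<le> (int (card C) + int (card A')) * (int (card C) + int (card A') - 1) + (int (card C) + int (card B')) * (int (card C) + int (card B') - 1)"
    by (rule arith_key[OF ele nb2])
  have i1: "int (card C * (card A - 1)) = int (card C) * (int (card C) + int (card A') - 1)"
    using int_mul_sub1[of "card C" "card A"] cA by simp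
  have i2: "int (card C * (card B - 1)) = int (card C) * (int (card C) + int (card B') - 1)"
    using int_mul_sub1[of "card C" "card B"] cB by simp
  have i3: "int (card A * (card A - 1)) = (int (card C) + int (card A')) * (int (card C) + int (card A') - 1)"
    using int_mul_sub1[of "card A" "card A"] cA by simp
  have i4: "int (card B * (card B - 1)) = (int (card C) + int (card B')) * (int (card C) + int (card B') - 1)"
    using int_mul_sub1[of "card B" "card B"] cB by simp
  define pA where "pA = card A * (card A - 1)"
  define pB where "pB = card B * (card B - 1)"
  define qA where "qA = card C * (card A - 1)"
  define qB where "qB = card C * (card B - 1)"
  have W1': "W (clone u v R) = card (Nei u v R) + 2 * card (Pw u v R) + 4 * pA + 2 * ep R A A"
    using W1 unfolding pA_def by (simp add: mult.assoc)
  have W2'': "W (clone v u R) = card (Nei u v R) + 2 * card (Pw v u R) + 4 * pB + 2 * ep R B B"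
    using W2 unfolding pB_def by (simp add: mult.assoc)
  have Bo': "card (Both u v R) = 2 * qA + 2 * qB + 2 * ep R A B"
    using Bo unfolding qA_def qB_def by (simp add: mult.assoc)
  have "int (2 * W R) \<le> int (W (clone u v R) + W (clone v u R))"
  proof -
    have "int (2 * W R) = 2 * int (card (Nei u v R)) + 2 * int (card (Pw u v R)) + 2 * int (card (Pw v u R))
       + 4 * int qA + 4 * int qB + 4 * int (ep R A B)"
      unfolding W0 Bo' by simp
    moreover have "int (W (clone u v R) + W (clone v u R)) = 2 * int (card (Nei u v R)) + 2 * int (card (Pw u v R)) + 2 * int (card (Pw v u R))
       + 4 * int pA + 4 * int pB + 2 * int (ep R A A) + 2 * int (ep R B B)"
      unfolding W1' W2'' by simp
    ultimately show ?thesis using i1 i2 i3 i4 key unfolding eAA eBB eAB pA_def[symmetric] pB_def[symmetric] qA_def[symmetric] qB_def[symmetric]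
      by simp
  qed
  thus ?thesis by linarith
qed

definition Rs :: "nat \<Rightarrow> (nat \<Rightarrow> nat \<Rightarrow> bool) set" where
  "Rs n = {R. grel n R \<and> k4free R}"

lemma finite_Rs: "finite (Rs n)"
proof -
  let ?f = "\<lambda>R::nat \<Rightarrow> nat \<Rightarrow> bool. {(x,y). R x y}"
  have inj: "inj_on ?f (Rs n)"
  proof (rule inj_onI)
    fix R S assume "?f R = ?f S"
    hence "R x y = S x y" for x y by (metis (no_types, lifting) case_prodD case_prodI mem_Collect_eq)
    thus "R = S" by blast
  qed
  have "?f ` Rs n \<subseteq> Pow ({..<n} \<times> {..<n})"
    unfolding Rs_def by (auto dest: grelD)
  hence "finite (?f ` Rs n)" by (rule finite_subset) auto
  thus ?thesis using finite_imageD[OF _ inj] by blast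
qed

lemma paths_mono:
  assumes "\<And>x y. R x y \<Longrightarrow> S x y"
  shows "paths R \<subseteq> paths S"
  using assms unfolding paths_def by auto

lemma add_edge:
  assumes g: "grel n R" and k: "k4free R" and un: "u < n" and vn: "v < n" and uv: "u \<noteq> v"
    and nuv: "\<not> R u v" and nu: "nb R u = {x}" and nv: "nb R v = {y}" and xy: "R x y"
  shows "\<exists>R'. R' \<in> Rs n \<and> W R < W R'"
proof -
  define R' where "R' = (\<lambda>a b. R a b \<or> (a = u \<and> b = y) \<or> (a = y \<and> b = u))"
  have Rux: "R u x" and Rvy: "R v y" using nu nv unfolding nb_def by auto
  have sy: "\<And>a b. R a b \<Longrightarrow> R b a" using grelD(4)[OF g] .
  have irr: "\<And>a. \<not> R a a" using grel_irrefl[OF g] .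
  have yn: "y < n" using grelD(2)[OF g Rvy] .
  have uy: "u \<noteq> y" using Rvy nuv sy by blast
  have Ru: "\<And>w. R u w \<Longrightarrow> w = x" using nu unfolding nb_def by auto
  have gR': "grel n R'" unfolding grel_def R'_def using g un yn uy
    by (auto dest: grelD)
  have R'u: "\<And>w. R' u w \<Longrightarrow> w = x \<or> w = y" unfolding R'_def using Ru uy by auto
  have R'u2: "\<And>w. R' w u \<Longrightarrow> w = x \<or> w = y" using R'u gR' grelD(4) by blast
  have R'irr: "\<And>a. \<not> R' a a" using grel_irrefl[OF gR'] .
  have R'other: "\<And>a b. a \<noteq> u \<Longrightarrow> b \<noteq> u \<Longrightarrow> R' a b = R a b" unfolding R'_def by auto
  have k': "k4free R'"
    unfolding k4free_def
  proof
    assume "\<exists>a b c d. R' a b \<and> R' a c \<and> R' a d \<and> R' b c \<and> R' b d \<and> R' c d"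
    then obtain a b c d where h: "R' a b" "R' a c" "R' a d" "R' b c" "R' b d" "R' c d" by blast
    have dist: "a \<noteq> b" "a \<noteq> c" "a \<noteq> d" "b \<noteq> c" "b \<noteq> d" "c \<noteq> d"
      using h R'irr by metis+
    show False
    proof (cases "u \<in> {a,b,c,d}")
      case False
      hence "R a b" "R a c" "R a d" "R b c" "R b d" "R c d" using h R'other by auto
      thus False using k unfolding k4free_def by blast
    next
      case True
      then consider "u = a" | "u = b" | "u = c" | "u = d" by blast
      thus False
      proof cases
        case 1 thus False using h(1-3) dist R'u by metis
      next
        case 2 thus False using h(1,4,5) dist R'u R'u2 by metis
      next
        case 3 thus False using h(2,4,6) dist R'u R'u2 by metis
      next
        case 4 thus False using h(3,5,6) dist R'u2 by metis
      qed
    qed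
  qed
  have sub: "paths R \<subseteq> paths R'" by (rule paths_mono) (simp add: R'_def)
  have vx: "v \<noteq> x" using Rux nuv by blast
  have yx: "y \<noteq> x" using Ru xy irr sy by blast
  have "(v,y,u,x) \<in> paths R'" unfolding paths_def R'_def using Rvy Rux uv vx yx uy by auto
  moreover have "(v,y,u,x) \<notin> paths R" unfolding paths_def using Ru sy yx by blast
  ultimately have "paths R \<subset> paths R'" using sub by blast
  hence "card (paths R) < card (paths R')" by (rule psubset_card_mono[OF finite_paths[OF gR']])
  thus ?thesis using gR' k' unfolding Rs_def W_def by blast
qed

definition twin :: "(nat \<Rightarrow> nat \<Rightarrow> bool) \<Rightarrow> nat \<Rightarrow> nat \<Rightarrow> bool" where
  "twin R x y \<longleftrightarrow> (\<forall>z. R x z = R y z)"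

definition TW :: "nat \<Rightarrow> (nat \<Rightarrow> nat \<Rightarrow> bool) \<Rightarrow> (nat \<times> nat) set" where
  "TW n R = {(x,y). x < n \<and> y < n \<and> x \<noteq> y \<and> twin R x y}"

definition cls :: "nat \<Rightarrow> (nat \<Rightarrow> nat \<Rightarrow> bool) \<Rightarrow> nat \<Rightarrow> nat set" where
  "cls n R x = {y. y < n \<and> twin R x y}"

lemma twin_increase:
  assumes g: "grel n R" and un: "u < n" and vn: "v < n" and uv: "u \<noteq> v" and nuv: "\<not> R u v"
    and nt: "\<not> twin R u v" and cc: "card (cls n R v) \<le> card (cls n R u)"
  shows "card (TW n R) < card (TW n (clone u v R))"
proof -
  let ?R' = "clone u v R"
  define Pv where "Pv = {p \<in> TW n R. fst p = v \<or> snd p = v}"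
  define Cv where "Cv = cls n R v - {v}"
  define Cu where "Cu = cls n R u"
  have fin: "finite (TW n X)" for X unfolding TW_def
    by (rule finite_subset[of _ "{..<n} \<times> {..<n}"]) auto
  have finc: "finite (cls n X x)" for X x unfolding cls_def by auto
  have Pv_eq: "Pv = ({v} \<times> Cv) \<union> (Cv \<times> {v})"
  proof -
    have ts: "\<And>a b. twin R a b = twin R b a" unfolding twin_def by auto
    show ?thesis unfolding Pv_def Cv_def TW_def cls_def using vn ts by auto
  qed
  have cPv: "card Pv = 2 * card Cv"
  proof -
    have "card Pv = card ({v} \<times> Cv) + card (Cv \<times> {v})" unfolding Pv_eq
      by (rule card_Un_disjoint) (auto simp: Cv_def finc)
    thus ?thesis by (simp add: card_cartesian_product)
  qed
  have vin: "v \<in> cls n R v" unfolding cls_def twin_def using vn by auto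
  have cCv: "card Cv = card (cls n R v) - 1" unfolding Cv_def using vin finc by simp
  have cTW: "card (TW n R) = card (TW n R - Pv) + card Pv"
  proof -
    have "TW n R = (TW n R - Pv) \<union> Pv" unfolding Pv_def by auto
    moreover have "card ((TW n R - Pv) \<union> Pv) = card (TW n R - Pv) + card Pv"
      by (rule card_Un_disjoint) (use fin in \<open>auto simp: Pv_def\<close>)
    ultimately show ?thesis by simp
  qed
  define N where "N = (TW n R - Pv) \<union> ({v} \<times> Cu) \<union> (Cu \<times> {v})"
  have vCu: "v \<notin> Cu" unfolding Cu_def cls_def using nt by auto
  have e: "\<And>x z. x \<noteq> v \<Longrightarrow> ?R' x z = R x (if z = v then u else z)" unfolding clone_def by auto
  have ev: "\<And>z. ?R' v z = R u (if z = v then u else z)" unfolding clone_def by auto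
  have sub: "N \<subseteq> TW n ?R'"
  proof
    fix p assume p: "p \<in> N"
    obtain x y where pd: "p = (x,y)" by (cases p) auto
    show "p \<in> TW n ?R'"
    proof (cases "p \<in> TW n R - Pv")
      case True
      hence "x < n" "y < n" "x \<noteq> y" "twin R x y" "x \<noteq> v" "y \<noteq> v"
        unfolding pd TW_def Pv_def by auto
      thus ?thesis unfolding pd TW_def twin_def by (auto simp: e twin_def)
    next
      case False
      hence "(x = v \<and> y \<in> Cu) \<or> (x \<in> Cu \<and> y = v)" using p unfolding N_def pd by auto
      moreover have "\<And>w. w \<in> Cu \<Longrightarrow> w < n \<and> w \<noteq> v \<and> twin R u w"
        using vCu unfolding Cu_def cls_def by blast
      ultimately show ?thesis unfolding pd TW_def twin_def using vn
        by (auto simp: e ev twin_def)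
    qed
  qed
  have cN: "card N = card (TW n R - Pv) + 2 * card Cu"
  proof -
    have f1: "finite (TW n R - Pv)" using fin by auto
    have fCu: "finite Cu" unfolding Cu_def using finc by auto
    have "card N = card (TW n R - Pv) + card ({v} \<times> Cu) + card (Cu \<times> {v})"
      unfolding N_def
      by (subst card_Un_disjoint; (use f1 fCu vCu in \<open>auto simp: Pv_def\<close>)?)+
    thus ?thesis by (simp add: card_cartesian_product)
  qed
  have "card N \<le> card (TW n ?R')" by (rule card_mono[OF fin sub])
  moreover have "card (cls n R u) \<ge> 1"
  proof -
    have "u \<in> cls n R u" unfolding cls_def twin_def using un by auto
    hence "cls n R u \<noteq> {}" by blast
    thus ?thesis using finc[of R u] by (simp add: Suc_le_eq card_gt_0_iff)
  qed
  ultimately show ?thesis using cTW cPv cCv cN cc unfolding Cu_def by linarith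
qed

definition complete :: "nat \<Rightarrow> (nat \<Rightarrow> nat \<Rightarrow> bool) \<Rightarrow> bool" where
  "complete n R \<longleftrightarrow> (\<forall>x y. x < n \<longrightarrow> y < n \<longrightarrow> x \<noteq> y \<longrightarrow> \<not> R x y \<longrightarrow> twin R x y)"

lemma empty_Rs: "(\<lambda>x y. False) \<in> Rs n"
  unfolding Rs_def grel_def k4free_def by auto

lemma exists_complete:
  "\<exists>R\<in>Rs n. (\<forall>S\<in>Rs n. W S \<le> W R) \<and> complete n R"
proof -
  define M where "M = Max (W ` Rs n)"
  have fW: "finite (W ` Rs n)" using finite_Rs by auto
  have neW: "W ` Rs n \<noteq> {}" using empty_Rs by blast
  have leM: "\<And>S. S \<in> Rs n \<Longrightarrow> W S \<le> M" unfolding M_def using fW by auto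
  define Ext where "Ext = {R \<in> Rs n. W R = M}"
  have "M \<in> W ` Rs n" unfolding M_def using fW neW by (rule Max_in)
  hence neE: "Ext \<noteq> {}" unfolding Ext_def by auto
  have fE: "finite Ext" unfolding Ext_def using finite_Rs by auto
  define T where "T = Max ((\<lambda>R. card (TW n R)) ` Ext)"
  have "T \<in> (\<lambda>R. card (TW n R)) ` Ext" unfolding T_def using fE neE by (intro Max_in) auto
  then obtain R0 where R0: "R0 \<in> Ext" "card (TW n R0) = T" by auto
  have leT: "\<And>S. S \<in> Ext \<Longrightarrow> card (TW n S) \<le> T" unfolding T_def using fE by auto
  have R0R: "R0 \<in> Rs n" "W R0 = M" using R0 unfolding Ext_def by auto
  have g: "grel n R0" and k: "k4free R0" using R0R unfolding Rs_def by auto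
  have "complete n R0"
    unfolding complete_def
  proof (intro allI impI, rule ccontr)
    fix u v assume un: "u < n" and vn: "v < n" and uv: "u \<noteq> v" and nuv: "\<not> R0 u v" and nt: "\<not> twin R0 u v"
    have nvu: "\<not> R0 v u" using nuv grelD(4)[OF g] by blast
    have nt': "\<not> twin R0 v u" using nt unfolding twin_def by auto
    show False
    proof (cases "\<exists>x y. nb R0 u = {x} \<and> nb R0 v = {y} \<and> R0 x y")
      case True
      then obtain x y where "nb R0 u = {x}" "nb R0 v = {y}" "R0 x y" by blast
      from add_edge[OF g k un vn uv nuv this] obtain R' where "R' \<in> Rs n" "W R0 < W R'" by blast
      thus False using leM R0R by fastforce
    next
      case False
      have ineq: "2 * W R0 \<le> W (clone u v R0) + W (clone v u R0)"
        by (rule sym_ineq[OF g un vn uv nuv False])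
      have c1: "clone u v R0 \<in> Rs n" unfolding Rs_def
        using clone_grel[OF g un vn uv nuv] clone_k4free[OF g un vn uv nuv k] by simp
      have c2: "clone v u R0 \<in> Rs n" unfolding Rs_def
        using clone_grel[OF g vn un uv[symmetric] nvu] clone_k4free[OF g vn un uv[symmetric] nvu k] by simp
      have e1: "clone u v R0 \<in> Ext" and e2: "clone v u R0 \<in> Ext"
        using leM[OF c1] leM[OF c2] ineq R0R(2) c1 c2 unfolding Ext_def by auto
      show False
      proof (cases "card (cls n R0 v) \<le> card (cls n R0 u)")
        case True
        have "card (TW n R0) < card (TW n (clone u v R0))"
          by (rule twin_increase[OF g un vn uv nuv nt True])
        thus False using leT[OF e1] R0(2) by simp
      next
        case False
        hence "card (cls n R0 u) \<le> card (cls n R0 v)" by simp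
        have "card (TW n R0) < card (TW n (clone v u R0))"
          by (rule twin_increase[OF g vn un uv[symmetric] nvu nt' \<open>card (cls n R0 u) \<le> card (cls n R0 v)\<close>])
        thus False using leT[OF e2] R0(2) by simp
      qed
    qed
  qed
  thus ?thesis using R0R leM by auto
qed

lemma labelling:
  assumes g: "grel n R" and k: "k4free R" and c: "complete n R"
  shows "\<exists>p. (\<forall>x. p x < (3::nat)) \<and> (\<forall>x y. R x y \<longleftrightarrow> x < n \<and> y < n \<and> p x \<noteq> p y)"
proof -
  have sy: "\<And>a b. R a b \<Longrightarrow> R b a" using grelD(4)[OF g] .
  have irr: "\<And>a. \<not> R a a" using grel_irrefl[OF g] .
  have tr: "\<And>x y z. x < n \<Longrightarrow> y < n \<Longrightarrow> z < n \<Longrightarrow> \<not> R x y \<Longrightarrow> \<not> R y z \<Longrightarrow> \<not> R x z"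
  proof -
    fix x y z assume h: "x < n" "y < n" "z < n" "\<not> R x y" "\<not> R y z"
    show "\<not> R x z"
    proof (cases "x = y")
      case True thus ?thesis using h by simp
    next
      case False
      hence "twin R x y" using c h unfolding complete_def by blast
      thus ?thesis using h unfolding twin_def by simp
    qed
  qed
  define r where "r = (SOME y. R 0 y)"
  define p where "p = (\<lambda>x. if \<not> R 0 x then 0 else if \<not> R r x then 1 else (2::nat))"
  have rr: "R 0 x \<Longrightarrow> R 0 r" for x unfolding r_def by (rule someI)
  have "R x y \<longleftrightarrow> x < n \<and> y < n \<and> p x \<noteq> p y" for x y
  proof
    assume h: "R x y"
    have xn: "x < n" and yn: "y < n" using grelD[OF g h] by auto
    have n0: "0 < n" using xn by simp
    show "x < n \<and> y < n \<and> p x \<noteq> p y"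
    proof (intro conjI xn yn notI)
      assume pe: "p x = p y"
      show False
      proof (cases "R 0 x")
        case False
        hence "\<not> R 0 y" using pe unfolding p_def by (auto split: if_splits)
        hence "\<not> R x y" using tr[OF xn n0 yn] False sy by blast
        thus False using h by simp
      next
        case True
        have r0: "R 0 r" by (rule rr[OF True])
        have rn: "r < n" using grelD(2)[OF g r0] .
        have Ry: "R 0 y" using pe True unfolding p_def by (auto split: if_splits)
        show False
        proof (cases "R r x")
          case False
          hence "\<not> R r y" using pe True Ry unfolding p_def by (auto split: if_splits)
          hence "\<not> R x y" using tr[OF xn rn yn] False sy by blast
          thus False using h by simp
        next
          case True
          have "R r y" using pe True \<open>R 0 x\<close> Ry unfolding p_def by (auto split: if_splits)
          thus False using k h r0 True \<open>R 0 x\<close> Ry unfolding k4free_def by blast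
        qed
      qed
    qed
  next
    assume h: "x < n \<and> y < n \<and> p x \<noteq> p y"
    hence xn: "x < n" and yn: "y < n" by auto
    show "R x y"
    proof (rule ccontr)
      assume nxy: "\<not> R x y"
      have n0: "0 < n" using xn by simp
      have same: "\<not> R a x \<longleftrightarrow> \<not> R a y" if "a < n" for a
        using tr[OF that xn yn _ nxy] tr[OF that yn xn _] nxy sy by blast
      show False
      proof (cases "R 0 x")
        case False
        hence "\<not> R 0 y" using same[OF n0] by simp
        thus False using h False unfolding p_def by simp
      next
        case True
        hence Ry: "R 0 y" using same[OF n0] by simp
        have rn: "r < n" using grelD(2)[OF g rr[OF True]] .
        have "R r x \<longleftrightarrow> R r y" using same[OF rn] by simp
        thus False using h True Ry unfolding p_def by (auto split: if_splits)
      qed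
    qed
  qed
  moreover have "\<forall>x. p x < 3" unfolding p_def by auto
  ultimately show ?thesis by blast
qed

lemma fiber_card:
  assumes g: "grel n R"
  shows "int (card {t \<in> paths R. fst (snd t) = b \<and> fst (snd (snd t)) = c}) =
    (if R b c then (int (card (nb R b)) - 1) * (int (card (nb R c)) - 1) - int (card (nb R b \<inter> nb R c)) else 0)"
proof (cases "R b c")
  case False
  hence e: "{t \<in> paths R. fst (snd t) = b \<and> fst (snd (snd t)) = c} = {}" unfolding paths_def by force
  show ?thesis unfolding e using False by simp
next
  case True
  have sy: "\<And>x y. R x y \<Longrightarrow> R y x" using grelD(4)[OF g] .
  have irr: "\<And>x. \<not> R x x" using grel_irrefl[OF g] .
  define X where "X = nb R b - {c}"
  define Y where "Y = nb R c - {b}"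
  have fX: "finite X" and fY: "finite Y" unfolding X_def Y_def using finite_nb[OF g] by auto
  have XY: "X \<inter> Y = nb R b \<inter> nb R c" unfolding X_def Y_def nb_def using irr by auto
  have eq: "{t \<in> paths R. fst (snd t) = b \<and> fst (snd (snd t)) = c} = (\<lambda>(a,d). (a,b,c,d)) ` (X \<times> Y - (\<lambda>a. (a,a)) ` (X \<inter> Y))"
  proof
    show "{t \<in> paths R. fst (snd t) = b \<and> fst (snd (snd t)) = c} \<subseteq> (\<lambda>(a,d). (a,b,c,d)) ` (X \<times> Y - (\<lambda>a. (a,a)) ` (X \<inter> Y))"
    proof
      fix t assume t: "t \<in> {t \<in> paths R. fst (snd t) = b \<and> fst (snd (snd t)) = c}"
      obtain a b' c' d where td: "t = (a,b',c',d)" by (cases t) auto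
      have "R a b" "R c d" "a \<noteq> c" "b \<noteq> d" "a \<noteq> d" using t unfolding td paths_def by auto
      hence "(a,d) \<in> X \<times> Y - (\<lambda>a. (a,a)) ` (X \<inter> Y)" unfolding X_def Y_def nb_def using sy by auto
      moreover have "t = (\<lambda>(a,d). (a,b,c,d)) (a,d)" using t td by auto
      ultimately show "t \<in> (\<lambda>(a,d). (a,b,c,d)) ` (X \<times> Y - (\<lambda>a. (a,a)) ` (X \<inter> Y))" by blast
    qed
    show "(\<lambda>(a,d). (a,b,c,d)) ` (X \<times> Y - (\<lambda>a. (a,a)) ` (X \<inter> Y)) \<subseteq> {t \<in> paths R. fst (snd t) = b \<and> fst (snd (snd t)) = c}"
      unfolding X_def Y_def nb_def paths_def using True sy by auto
  qed
  have inj: "inj_on (\<lambda>(a,d). (a,b,c,d)) S" for S :: "(nat \<times> nat) set" by (auto simp: inj_on_def)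
  have sub: "(\<lambda>a. (a,a)) ` (X \<inter> Y) \<subseteq> X \<times> Y" by auto
  have cd: "card ((\<lambda>a. (a,a)) ` (X \<inter> Y)) = card (X \<inter> Y)" by (rule card_image) (auto simp: inj_on_def)
  have "card {t \<in> paths R. fst (snd t) = b \<and> fst (snd (snd t)) = c} = card X * card Y - card (X \<inter> Y)"
    unfolding eq card_image[OF inj] using card_Diff_subset[OF finite_subset[OF sub] sub] fX fY cd
    by (simp add: card_cartesian_product)
  moreover have "card (X \<inter> Y) \<le> card X * card Y"
    using card_mono[OF _ sub] fX fY cd by (simp add: card_cartesian_product)
  moreover have "card X = card (nb R b) - 1" "card Y = card (nb R c) - 1"
    unfolding X_def Y_def using True sy finite_nb[OF g] by (auto simp: nb_def)
  moreover have "card (nb R b) \<ge> 1" "card (nb R c) \<ge> 1"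
    using True sy finite_nb[OF g, of b] finite_nb[OF g, of c]
    by (auto simp: Suc_le_eq card_gt_0_iff nb_def)
  ultimately show ?thesis using True XY by (simp add: of_nat_diff)
qed

lemma W_edge:
  assumes g: "grel n R"
  shows "int (W R) = (\<Sum>b<n. \<Sum>c<n. if R b c then (int (card (nb R b)) - 1) * (int (card (nb R c)) - 1) - int (card (nb R b \<inter> nb R c)) else 0)"
proof -
  let ?m = "\<lambda>t::nat\<times>nat\<times>nat\<times>nat. (fst (snd t), fst (snd (snd t)))"
  have f: "finite (paths R)" by (rule finite_paths[OF g])
  have im: "?m ` paths R \<subseteq> {..<n} \<times> {..<n}" using paths_sub[OF g] by auto
  have "W R = (\<Sum>k\<in>{..<n} \<times> {..<n}. card {t \<in> paths R. ?m t = k})"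
    unfolding W_def card_eq_sum using sum.group[OF f _ im, of "\<lambda>_. 1::nat"] by simp
  also have "\<dots> = (\<Sum>(b,c)\<in>{..<n} \<times> {..<n}. card {t \<in> paths R. ?m t = (b,c)})"
    by (rule sum.cong[OF refl]) auto
  also have "\<dots> = (\<Sum>b<n. \<Sum>c<n. card {t \<in> paths R. ?m t = (b,c)})"
    by (simp add: sum.cartesian_product)
  finally have "int (W R) = (\<Sum>b<n. \<Sum>c<n. int (card {t \<in> paths R. fst (snd t) = b \<and> fst (snd (snd t)) = c}))"
    by simp
  thus ?thesis using fiber_card[OF g] by simp
qed

definition Mp :: "nat \<Rightarrow> (nat \<Rightarrow> nat) \<Rightarrow> nat \<Rightarrow> nat \<Rightarrow> bool" where
  "Mp n p = (\<lambda>x y. x < n \<and> y < n \<and> p x \<noteq> p y)"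

definition sz :: "nat \<Rightarrow> (nat \<Rightarrow> nat) \<Rightarrow> nat \<Rightarrow> nat" where
  "sz n p i = card {x. x < n \<and> p x = i}"

definition Fp :: "int \<Rightarrow> int \<Rightarrow> int \<Rightarrow> int" where
  "Fp x y z = x*y*((y+z-1)*(x+z-1) - z) + x*z*((y+z-1)*(x+y-1) - y) + y*x*((x+z-1)*(y+z-1) - z)
     + y*z*((x+z-1)*(x+y-1) - x) + z*x*((x+y-1)*(y+z-1) - y) + z*y*((x+y-1)*(x+z-1) - x)"

lemma grel_Mp: "grel n (Mp n p)" unfolding grel_def Mp_def by auto

lemma fiber_sum:
  assumes p3: "\<forall>x. p x < 3"
  shows "(\<Sum>b<n. f (p b)) = (\<Sum>i<3. int (sz n p i) * f i)"
proof -
  have im: "p ` {..<n} \<subseteq> {..<3}" using p3 by auto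
  have "(\<Sum>b<n. f (p b)) = (\<Sum>i<3. \<Sum>b\<in>{x. x \<in> {..<n} \<and> p x = i}. f (p b))"
    using sum.group[OF finite_lessThan finite_lessThan im, of "\<lambda>b. f (p b)"] by simp
  also have "\<dots> = (\<Sum>i<3. \<Sum>b\<in>{x. x \<in> {..<n} \<and> p x = i}. f i)"
    by (rule sum.cong[OF refl], rule sum.cong[OF refl]) auto
  also have "\<dots> = (\<Sum>i<3. int (sz n p i) * f i)"
    unfolding sz_def by simp
  finally show ?thesis .
qed

lemma sum3: "(\<Sum>i<(3::nat). f i) = f 0 + f 1 + f 2"
proof -
  have "{..<3::nat} = {0,1,2}" by auto
  thus ?thesis by (simp add: add.assoc)
qed

lemma sz_sum:
  assumes p3: "\<forall>x. p x < 3"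
  shows "sz n p 0 + sz n p 1 + sz n p 2 = n"
proof -
  have "(\<Sum>b<n. (1::int)) = (\<Sum>i<3. int (sz n p i) * 1)" by (rule fiber_sum[OF p3])
  hence "int n = int (sz n p 0) + int (sz n p 1) + int (sz n p 2)"
    by (simp add: sum3)
  thus ?thesis by linarith
qed

lemma card_nb_Mp:
  assumes b: "b < n"
  shows "card (nb (Mp n p) b) = n - sz n p (p b)"
proof -
  have e: "nb (Mp n p) b = {..<n} - {x. x < n \<and> p x = p b}" unfolding nb_def Mp_def using b by auto
  have "card ({..<n} - {x. x < n \<and> p x = p b}) = card {..<n} - card {x. x < n \<and> p x = p b}"
    by (rule card_Diff_subset) auto
  thus ?thesis unfolding sz_def e by simp
qed

lemma sz_le: "sz n p i \<le> n"
proof -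
  have "{x. x < n \<and> p x = i} \<subseteq> {..<n}" by auto
  thus ?thesis unfolding sz_def using card_mono[of "{..<n}"] by fastforce
qed

lemma third:
  assumes "(a::nat) < 3" "b < 3" "c < 3" "b \<noteq> c"
  shows "(a \<noteq> b \<and> a \<noteq> c) \<longleftrightarrow> a = 3 - b - c"
proof -
  have h: "a \<in> {0,1,2}" "b \<in> {0,1,2}" "c \<in> {0,1,2}" using assms by auto
  show ?thesis using h assms(4) by (elim insertE emptyE) simp_all
qed

lemma codeg_Mp:
  assumes p3: "\<forall>x. p x < 3" and b: "b < n" and c: "c < n" and ne: "p b \<noteq> p c"
  shows "card (nb (Mp n p) b \<inter> nb (Mp n p) c) = sz n p (3 - p b - p c)"
proof -
  have "nb (Mp n p) b \<inter> nb (Mp n p) c = {x. x < n \<and> p x = 3 - p b - p c}"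
  proof -
    have k: "(a \<noteq> p b \<and> a \<noteq> p c) \<longleftrightarrow> a = 3 - p b - p c" if "a < 3" for a
      by (rule third[OF that _ _ ne]) (use p3 in auto)
    show ?thesis
    proof (rule set_eqI)
      fix x
      have px: "p x < 3" using p3 by simp
      have "x \<in> nb (Mp n p) b \<inter> nb (Mp n p) c \<longleftrightarrow> x < n \<and> (p x \<noteq> p b \<and> p x \<noteq> p c)"
        unfolding nb_def Mp_def using b c by auto
      with k[OF px] show "x \<in> nb (Mp n p) b \<inter> nb (Mp n p) c \<longleftrightarrow> x \<in> {x. x < n \<and> p x = 3 - p b - p c}"
        by (simp only: mem_Collect_eq)
    qed
  qed
  thus ?thesis unfolding sz_def by simp
qed

lemma W_Mp:
  assumes p3: "\<forall>x. p x < 3"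
  shows "int (W (Mp n p)) = Fp (int (sz n p 0)) (int (sz n p 1)) (int (sz n p 2))"
proof -
  define s where "s = (\<lambda>i. int (sz n p i))"
  define Hf where "Hf = (\<lambda>i j::nat. if i \<noteq> j then (int n - s i - 1) * (int n - s j - 1) - s (3 - i - j) else 0)"
  have g: "grel n (Mp n p)" by (rule grel_Mp)
  have "int (W (Mp n p)) = (\<Sum>b<n. \<Sum>c<n. Hf (p b) (p c))"
    unfolding W_edge[OF g]
  proof (rule sum.cong[OF refl], rule sum.cong[OF refl])
    fix b c assume b: "b \<in> {..<n}" and c: "c \<in> {..<n}"
    show "(if Mp n p b c then (int (card (nb (Mp n p) b)) - 1) * (int (card (nb (Mp n p) c)) - 1) - int (card (nb (Mp n p) b \<inter> nb (Mp n p) c)) else 0) = Hf (p b) (p c)"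
    proof (cases "p b = p c")
      case True thus ?thesis unfolding Hf_def Mp_def by simp
    next
      case False
      have "int (card (nb (Mp n p) b)) = int n - s (p b)"
        using card_nb_Mp[of b n p] b sz_le[of n p "p b"] unfolding s_def by (simp add: of_nat_diff)
      moreover have "int (card (nb (Mp n p) c)) = int n - s (p c)"
        using card_nb_Mp[of c n p] c sz_le[of n p "p c"] unfolding s_def by (simp add: of_nat_diff)
      moreover have "int (card (nb (Mp n p) b \<inter> nb (Mp n p) c)) = s (3 - p b - p c)"
        using codeg_Mp[OF p3 _ _ False] b c unfolding s_def by simp
      ultimately show ?thesis using False b c unfolding Hf_def Mp_def by simp
    qed
  qed
  also have "\<dots> = (\<Sum>b<n. \<Sum>j<3. s j * Hf (p b) j)"
    unfolding s_def by (rule sum.cong[OF refl]) (rule fiber_sum[OF p3])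
  also have "\<dots> = (\<Sum>i<3. s i * (\<Sum>j<3. s j * Hf i j))"
    unfolding s_def by (rule fiber_sum[OF p3])
  also have "\<dots> = Fp (s 0) (s 1) (s 2)"
  proof -
    have n: "int n = s 0 + s 1 + s 2" using sz_sum[OF p3, of n] unfolding s_def by linarith
    show ?thesis unfolding sum3 Hf_def n Fp_def by (simp add: algebra_simps)
  qed
  finally show ?thesis unfolding s_def .
qed

lemma Fp_sym12: "Fp x y z = Fp y x z" unfolding Fp_def by (simp add: algebra_simps)
lemma Fp_sym23: "Fp x y z = Fp x z y" unfolding Fp_def by (simp add: algebra_simps)

lemma Fp_move:
  fixes x y z :: int
  assumes "x \<ge> y + 2" "y \<ge> 0" "z \<ge> 0"
  shows "Fp x y z \<le> Fp (x - 1) (y + 1) z"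
proof -
  define e where "e = x - y - 2"
  have e0: "e \<ge> 0" using assms unfolding e_def by simp
  have x: "x = y + 2 + e" unfolding e_def by simp
  define D where "D = 4*e*e*y + 6*e*e*z + 4*e*y*y + 12*e*y*z + 8*e*y + 2*e*z*z + 4*e*z + 4*y*y + 12*y*z + 4*y"
  define Z where "Z = z * z - z"
  have eq: "Fp (x - 1) (y + 1) z - Fp x y z = D + 2 * Z"
    unfolding x Fp_def D_def Z_def by (simp add: algebra_simps)
  have Z: "Z \<ge> 0" unfolding Z_def
  proof (cases "z = 0")
    case False
    hence "z \<ge> 1" using assms by simp
    hence "z * 1 \<le> z * z" using assms by (intro mult_left_mono) auto
    thus "z * z - z \<ge> 0" by simp
  qed simp
  have D: "D \<ge> 0" unfolding D_def
    using e0 assms by (intro add_nonneg_nonneg mult_nonneg_nonneg) auto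
  show ?thesis using eq Z D by linarith
qed

lemma Fp_move_nat:
  fixes a b c :: nat
  assumes "a \<ge> b + 2"
  shows "Fp (int a) (int b) (int c) \<le> Fp (int (a - 1)) (int (b + 1)) (int c)"
proof -
  have h: "int (a - 1) = int a - 1" using assms by (simp add: of_nat_diff)
  have h2: "int (b + 1) = int b + 1" by simp
  show ?thesis unfolding h h2 by (rule Fp_move) (use assms in auto)
qed

lemma balanced_cases:
  fixes a b c n :: nat
  assumes "a + b + c = n" "a \<le> b + 1" "b \<le> a + 1" "a \<le> c + 1" "c \<le> a + 1" "b \<le> c + 1" "c \<le> b + 1"
  shows "Fp (int a) (int b) (int c) = Fp (int ((n+2) div 3)) (int ((n+1) div 3)) (int (n div 3))"
proof -
  define q where "q = n div 3"
  define r where "r = n mod 3"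
  have n: "n = 3 * q + r" and r: "r < 3" unfolding q_def r_def by auto
  have "r = 0 \<or> r = 1 \<or> r = 2" using r by auto
  hence d: "(n+2) div 3 = q + (if r \<ge> 1 then 1 else 0)" "(n+1) div 3 = q + (if r = 2 then 1 else 0)" "n div 3 = q"
    unfolding n by auto
  have "a \<ge> q" "a \<le> q + 1" "b \<ge> q" "b \<le> q + 1" "c \<ge> q" "c \<le> q + 1" using assms n r by linarith+
  hence "a = q \<or> a = q + 1" "b = q \<or> b = q + 1" "c = q \<or> c = q + 1" by auto
  thus ?thesis using assms(1) n r unfolding d
    by (elim disjE) (simp_all add: Fp_def algebra_simps)
qed

lemma balance:
  fixes a b c :: nat
  shows "Fp (int a) (int b) (int c) \<le> Fp (int ((a+b+c+2) div 3)) (int ((a+b+c+1) div 3)) (int ((a+b+c) div 3))"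
proof (induction "a*a+b*b+c*c" arbitrary: a b c rule: less_induct)
  case less
  let ?T = "\<lambda>n::nat. Fp (int ((n+2) div 3)) (int ((n+1) div 3)) (int (n div 3))"
  have IH: "\<And>a' b' c'. a'*a'+b'*b'+c'*c' < a*a+b*b+c*c \<Longrightarrow> a'+b'+c' = a+b+c \<Longrightarrow>
      Fp (int a') (int b') (int c') \<le> ?T (a+b+c)"
    using less by metis
  have sq: "(x - 1) * (x - 1) + (y + 1) * (y + 1) < x * x + y * y" if "x \<ge> y + 2" for x y :: nat
  proof -
    define e where "e = x - y - 2"
    have "x = y + 2 + e" using that unfolding e_def by simp
    thus ?thesis by (simp add: algebra_simps)
  qed
  show ?case
  proof (cases "a \<ge> b + 2")
    case True
    have "Fp (int a) (int b) (int c) \<le> Fp (int (a-1)) (int (b+1)) (int c)" by (rule Fp_move_nat[OF True])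
    also have "\<dots> \<le> ?T (a+b+c)" using True sq[OF True] by (intro IH) auto
    finally show ?thesis .
  next
    case c1: False
    show ?thesis
    proof (cases "b \<ge> a + 2")
      case True
      have "Fp (int a) (int b) (int c) = Fp (int b) (int a) (int c)" by (rule Fp_sym12)
      also have "\<dots> \<le> Fp (int (b-1)) (int (a+1)) (int c)" by (rule Fp_move_nat[OF True])
      also have "\<dots> = Fp (int (a+1)) (int (b-1)) (int c)" by (rule Fp_sym12)
      also have "\<dots> \<le> ?T (a+b+c)" using True sq[OF True] by (intro IH) auto
      finally show ?thesis .
    next
      case c2: False
      show ?thesis
      proof (cases "a \<ge> c + 2")
        case True
        have "Fp (int a) (int b) (int c) = Fp (int a) (int c) (int b)" by (rule Fp_sym23)
        also have "\<dots> \<le> Fp (int (a-1)) (int (c+1)) (int b)" by (rule Fp_move_nat[OF True])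
        also have "\<dots> = Fp (int (a-1)) (int b) (int (c+1))" by (rule Fp_sym23)
        also have "\<dots> \<le> ?T (a+b+c)" using True sq[OF True] by (intro IH) auto
        finally show ?thesis .
      next
        case c3: False
        show ?thesis
        proof (cases "c \<ge> a + 2")
          case True
          have "Fp (int a) (int b) (int c) = Fp (int c) (int b) (int a)"
            by (metis Fp_sym12 Fp_sym23)
          also have "\<dots> \<le> Fp (int (c-1)) (int b) (int (a+1))"
          proof -
            have "Fp (int c) (int b) (int a) = Fp (int c) (int a) (int b)" by (rule Fp_sym23)
            also have "\<dots> \<le> Fp (int (c-1)) (int (a+1)) (int b)" by (rule Fp_move_nat[OF True])
            also have "\<dots> = Fp (int (c-1)) (int b) (int (a+1))" by (rule Fp_sym23)
            finally show ?thesis .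
          qed
          also have "\<dots> = Fp (int (a+1)) (int b) (int (c-1))" by (metis Fp_sym12 Fp_sym23)
          also have "\<dots> \<le> ?T (a+b+c)" using True sq[OF True] by (intro IH) auto
          finally show ?thesis .
        next
          case c4: False
          show ?thesis
          proof (cases "b \<ge> c + 2")
            case True
            have "Fp (int a) (int b) (int c) = Fp (int b) (int c) (int a)" by (metis Fp_sym12 Fp_sym23)
            also have "\<dots> \<le> Fp (int (b-1)) (int (c+1)) (int a)" by (rule Fp_move_nat[OF True])
            also have "\<dots> = Fp (int a) (int (b-1)) (int (c+1))" by (metis Fp_sym12 Fp_sym23)
            also have "\<dots> \<le> ?T (a+b+c)" using True sq[OF True] by (intro IH) auto
            finally show ?thesis .
          next
            case c5: False
            show ?thesis
            proof (cases "c \<ge> b + 2")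
              case True
              have "Fp (int a) (int b) (int c) = Fp (int c) (int b) (int a)" by (metis Fp_sym12 Fp_sym23)
              also have "\<dots> \<le> Fp (int (c-1)) (int (b+1)) (int a)" by (rule Fp_move_nat[OF True])
              also have "\<dots> = Fp (int a) (int (b+1)) (int (c-1))" by (metis Fp_sym12 Fp_sym23)
              also have "\<dots> \<le> ?T (a+b+c)" using True sq[OF True] by (intro IH) auto
              finally show ?thesis .
            next
              case c6: False
              have bc: "a \<le> b + 1" "b \<le> a + 1" "a \<le> c + 1" "c \<le> a + 1" "b \<le> c + 1" "c \<le> b + 1"
                using c1 c2 c3 c4 c5 c6 by auto
              from balanced_cases[OF refl bc] show ?thesis by simp
            qed
          qed
        qed
      qed
    qed
  qed
qed

definition relE :: "nat set set \<Rightarrow> nat \<Rightarrow> nat \<Rightarrow> bool" where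
  "relE E = (\<lambda>x y. {x, y} \<in> E)"

lemma simple_grel:
  assumes "simple_graph G" "fst G = {0..<n}"
  shows "grel n (relE (snd G))"
  unfolding grel_def relE_def
proof (intro allI impI conjI)
  fix x y assume h: "{x, y} \<in> snd G"
  have c: "card {x, y} = 2" and s: "{x, y} \<subseteq> {0..<n}" using assms h unfolding simple_graph_def by auto
  show "x < n" "y < n" using s by auto
  show "x \<noteq> y" using c by (cases "x = y") auto
  show "{y, x} \<in> snd G" using h by (simp add: insert_commute)
qed

lemma finite_subgraphs:
  assumes "simple_graph G"
  shows "finite (subgraphs G)"
proof -
  have fV: "finite (fst G)" using assms unfolding simple_graph_def by auto
  have "snd G \<subseteq> Pow (fst G)" using assms unfolding simple_graph_def by auto
  hence fE: "finite (snd G)" using fV by (meson finite_Pow_iff finite_subset)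
  have "subgraphs G \<subseteq> Pow (fst G) \<times> Pow (snd G)" unfolding subgraphs_def by auto
  thus ?thesis using fV fE by (meson finite_Pow_iff finite_SigmaI finite_subset)
qed

lemma K4_edge: "p < 4 \<Longrightarrow> q < 4 \<Longrightarrow> {p, q} \<in> snd (complete_graph 4) \<longleftrightarrow> p \<noteq> q"
  unfolding complete_graph_def by (auto simp: doubleton_eq_iff)

lemma clique_copy:
  assumes s: "simple_graph G" and h: "relE (snd G) a b" "relE (snd G) a c" "relE (snd G) a d"
     "relE (snd G) b c" "relE (snd G) b d" "relE (snd G) c d"
  shows "count_copies (complete_graph 4) G > 0"
proof -
  let ?E = "snd G"
  have dist: "a \<noteq> b" "a \<noteq> c" "a \<noteq> d" "b \<noteq> c" "b \<noteq> d" "c \<noteq> d"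
  proof -
    have ne: "\<And>x y. relE (snd G) x y \<Longrightarrow> x \<noteq> y"
    proof -
      fix x y assume "relE (snd G) x y"
      hence "card {x, y} = 2" using s unfolding relE_def simple_graph_def by auto
      thus "x \<noteq> y" by (cases "x = y") auto
    qed
    show "a \<noteq> b" "a \<noteq> c" "a \<noteq> d" "b \<noteq> c" "b \<noteq> d" "c \<noteq> d" using ne h by auto
  qed
  have inV: "a \<in> fst G" "b \<in> fst G" "c \<in> fst G" "d \<in> fst G"
    using h s unfolding relE_def simple_graph_def by auto
  define W where "W = {a,b,c,d}"
  define F where "F = {{a,b},{a,c},{a,d},{b,c},{b,d},{c,d}}"
  define f where "f = (\<lambda>x. if x = a then 0 else if x = b then 1 else if x = c then 2 else (3::nat))"
  have sub: "(W, F) \<in> subgraphs G" unfolding subgraphs_def W_def F_def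
    using h inV unfolding relE_def by auto
  have bij: "bij_betw f W {0..<4}"
  proof -
    have "inj_on f W" unfolding inj_on_def W_def f_def using dist by auto
    moreover have "f ` W = {0..<4}" unfolding W_def f_def using dist by (auto; arith)
    ultimately show ?thesis by (simp add: bij_betw_def)
  qed
  have f4: "\<And>x. f x < 4" unfolding f_def by auto
  have finj: "\<And>x y. x \<in> W \<Longrightarrow> y \<in> W \<Longrightarrow> f x = f y \<longleftrightarrow> x = y"
    using bij unfolding bij_betw_def inj_on_def by blast
  have c2: "\<forall>e\<in>F. card e = 2" unfolding F_def using dist by auto
  have FW: "{u, v} \<in> F \<longleftrightarrow> u \<noteq> v" if uv: "u \<in> W" "v \<in> W" for u v
  proof
    assume "{u, v} \<in> F"
    hence "card {u, v} = 2" using c2 by blast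
    thus "u \<noteq> v" by (cases "u = v") auto
  next
    assume "u \<noteq> v"
    thus "{u, v} \<in> F" using uv unfolding W_def F_def by (elim insertE emptyE; simp add: insert_commute)
  qed
  have iso: "graph_iso (W, F) (complete_graph 4)"
    unfolding graph_iso_def
  proof (rule exI[of _ f], intro conjI ballI)
    show "bij_betw f (fst (W, F)) (fst (complete_graph 4))" using bij unfolding complete_graph_def by simp
    fix u v assume "u \<in> fst (W, F)" "v \<in> fst (W, F)"
    hence uv: "u \<in> W" "v \<in> W" by auto
    show "{u, v} \<in> snd (W, F) \<longleftrightarrow> {f u, f v} \<in> snd (complete_graph 4)"
      using FW[OF uv] K4_edge[OF f4 f4] finj[OF uv] by simp
  qed
  have "(W, F) \<in> {S \<in> subgraphs G. graph_iso S (complete_graph 4)}" using sub iso by simp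
  moreover have "finite {S \<in> subgraphs G. graph_iso S (complete_graph 4)}" using finite_subgraphs[OF s] by simp
  ultimately show ?thesis unfolding count_copies_def by (auto simp: card_gt_0_iff)
qed

lemma k4free_of_count:
  assumes "simple_graph G" "count_copies (complete_graph 4) G = 0"
  shows "k4free (relE (snd G))"
  unfolding k4free_def
proof
  assume "\<exists>a b c d. relE (snd G) a b \<and> relE (snd G) a c \<and> relE (snd G) a d \<and> relE (snd G) b c \<and> relE (snd G) b d \<and> relE (snd G) c d"
  then obtain a b c d where "relE (snd G) a b" "relE (snd G) a c" "relE (snd G) a d" "relE (snd G) b c" "relE (snd G) b d" "relE (snd G) c d"
    by blast
  from clique_copy[OF assms(1) this] show False using assms(2) by simp
qed

lemma count_of_k4free:
  assumes s: "simple_graph G" and k: "k4free (relE (snd G))"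
  shows "count_copies (complete_graph 4) G = 0"
proof -
  have em: "{S \<in> subgraphs G. graph_iso S (complete_graph 4)} = {}"
  proof (rule ccontr)
    assume "{S \<in> subgraphs G. graph_iso S (complete_graph 4)} \<noteq> {}"
    then obtain W F where S: "(W, F) \<in> subgraphs G" "graph_iso (W, F) (complete_graph 4)" by auto
    then obtain f where bij: "bij_betw f W {0..<4}"
      and iso: "\<forall>u\<in>W. \<forall>v\<in>W. {u, v} \<in> F \<longleftrightarrow> {f u, f v} \<in> snd (complete_graph 4)"
      unfolding graph_iso_def complete_graph_def by auto
    define g where "g = inv_into W f"
    have gW: "\<And>i. i < 4 \<Longrightarrow> g i \<in> W" and fg: "\<And>i. i < 4 \<Longrightarrow> f (g i) = i"
      using bij unfolding g_def bij_betw_def by (auto intro: inv_into_into f_inv_into_f)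
    have FE: "F \<subseteq> snd G" using S unfolding subgraphs_def by auto
    have e: "\<And>i j. i < 4 \<Longrightarrow> j < 4 \<Longrightarrow> i \<noteq> j \<Longrightarrow> relE (snd G) (g i) (g j)"
    proof -
      fix i j :: nat assume ij: "i < 4" "j < 4" "i \<noteq> j"
      have "{f (g i), f (g j)} \<in> snd (complete_graph 4)" using fg ij K4_edge by simp
      hence "{g i, g j} \<in> F" using iso gW ij by blast
      thus "relE (snd G) (g i) (g j)" using FE unfolding relE_def by auto
    qed
    have "relE (snd G) (g 0) (g 1)" "relE (snd G) (g 0) (g 2)" "relE (snd G) (g 0) (g 3)"
      "relE (snd G) (g 1) (g 2)" "relE (snd G) (g 1) (g 3)" "relE (snd G) (g 2) (g 3)"
      by (rule e; simp)+
    thus False using k unfolding k4free_def by blast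
  qed
  show ?thesis unfolding count_copies_def em by (rule card.empty)
qed

definition ph :: "nat \<times> nat \<times> nat \<times> nat \<Rightarrow> nat set \<times> nat set set" where
  "ph t = (case t of (a,b,c,d) \<Rightarrow> ({a,b,c,d}, {{a,b},{b,c},{c,d}}))"

definition rv :: "nat \<times> nat \<times> nat \<times> nat \<Rightarrow> nat \<times> nat \<times> nat \<times> nat" where
  "rv t = (case t of (a,b,c,d) \<Rightarrow> (d,c,b,a))"

lemma relE_ne:
  assumes "simple_graph G" "relE (snd G) x y"
  shows "x \<noteq> y" "x \<in> fst G" "y \<in> fst G"
proof -
  have c: "card {x, y} = 2" and sub: "{x,y} \<subseteq> fst G" using assms unfolding relE_def simple_graph_def by auto
  show "x \<noteq> y" using c by (cases "x = y") auto
  show "x \<in> fst G" "y \<in> fst G" using sub by auto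
qed

lemma mid_lemma:
  assumes d: "a \<noteq> b" "a \<noteq> c" "a \<noteq> d" "b \<noteq> c" "b \<noteq> d" "c \<noteq> d"
    and h: "{x,y} \<in> {{a,b},{b,c},{c,d}}" "{x,z} \<in> {{a,b},{b,c},{c,d}}" "y \<noteq> z"
  shows "x = b \<or> x = c"
  using h d by (auto simp: doubleton_eq_iff)

lemma nbr_b:
  assumes d: "a \<noteq> b" "a \<noteq> c" "a \<noteq> d" "b \<noteq> c" "b \<noteq> d" "c \<noteq> d"
    and h: "{b,y} \<in> {{a,b},{b,c},{c,d}}"
  shows "y = a \<or> y = c"
  using h d by (auto simp: doubleton_eq_iff)

lemma nbr_c:
  assumes d: "a \<noteq> b" "a \<noteq> c" "a \<noteq> d" "b \<noteq> c" "b \<noteq> d" "c \<noteq> d"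
    and h: "{c,y} \<in> {{a,b},{b,c},{c,d}}"
  shows "y = b \<or> y = d"
  using h d by (auto simp: doubleton_eq_iff)

lemma fiber_ph:
  assumes s: "simple_graph G" and t: "t \<in> paths (relE (snd G))"
  shows "{t' \<in> paths (relE (snd G)). ph t' = ph t} = {t, rv t}" "t \<noteq> rv t"
proof -
  let ?R = "relE (snd G)"
  obtain a b c d where td: "t = (a,b,c,d)" by (cases t) auto
  have p: "?R a b" "?R b c" "?R c d" "a \<noteq> c" "b \<noteq> d" "a \<noteq> d" using t unfolding td paths_def by auto
  have d: "a \<noteq> b" "a \<noteq> c" "a \<noteq> d" "b \<noteq> c" "b \<noteq> d" "c \<noteq> d" using p relE_ne[OF s] by auto
  show "t \<noteq> rv t" unfolding td rv_def using d by auto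
  show "{t' \<in> paths ?R. ph t' = ph t} = {t, rv t}"
  proof
    show "{t' \<in> paths ?R. ph t' = ph t} \<subseteq> {t, rv t}"
    proof
      fix t' assume t': "t' \<in> {t' \<in> paths ?R. ph t' = ph t}"
      obtain a' b' c' d' where td': "t' = (a',b',c',d')" by (cases t') auto
      have p': "?R a' b'" "?R b' c'" "?R c' d'" "a' \<noteq> c'" "b' \<noteq> d'" "a' \<noteq> d'" using t' unfolding td' paths_def by auto
      have d': "b' \<noteq> c'" using p' relE_ne[OF s] by auto
      have "ph t' = ph t" using t' by simp
      hence "snd (ph t') = snd (ph t)" by simp
      hence E: "{{a',b'},{b',c'},{c',d'}} = {{a,b},{b,c},{c,d}}" unfolding td td' ph_def by (simp only: case_prod_conv snd_conv)
      have e1: "{a',b'} \<in> {{a,b},{b,c},{c,d}}" "{b',c'} \<in> {{a,b},{b,c},{c,d}}" "{c',d'} \<in> {{a,b},{b,c},{c,d}}"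
        unfolding E[symmetric] by simp_all
      have bb: "b' = b \<or> b' = c"
        by (rule mid_lemma[OF d, of b' a' c']) (use e1 p' in \<open>auto simp: insert_commute\<close>)
      have cc: "c' = b \<or> c' = c"
        by (rule mid_lemma[OF d, of c' b' d']) (use e1 p' in \<open>auto simp: insert_commute\<close>)
      have "t' = t \<or> t' = rv t"
      proof (cases "b' = b")
        case True
        hence c': "c' = c" using cc d' by auto
        have "a' = a \<or> a' = c" using nbr_b[OF d, of a'] e1 True by (simp add: insert_commute)
        hence "a' = a" using p' c' by auto
        moreover have "d' = b \<or> d' = d" using nbr_c[OF d, of d'] e1 c' by simp
        hence "d' = d" using p' True by auto
        ultimately show ?thesis unfolding td td' using True c' by simp
      next
        case False
        hence b': "b' = c" and c': "c' = b" using bb cc d' by auto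
        have "a' = b \<or> a' = d" using nbr_c[OF d, of a'] e1 b' by (simp add: insert_commute)
        hence "a' = d" using p' c' by auto
        moreover have "d' = a \<or> d' = c" using nbr_b[OF d, of d'] e1 c' by simp
        hence "d' = a" using p' b' by auto
        ultimately show ?thesis unfolding td td' rv_def using b' c' by simp
      qed
      thus "t' \<in> {t, rv t}" by simp
    qed
    have sy: "\<And>x y. ?R x y \<Longrightarrow> ?R y x" unfolding relE_def by (simp add: insert_commute)
    have "rv t \<in> paths ?R" unfolding td rv_def paths_def using p sy by auto
    moreover have "ph (rv t) = ph t" unfolding td rv_def ph_def by (auto simp: insert_commute)
    ultimately show "{t, rv t} \<subseteq> {t' \<in> paths ?R. ph t' = ph t}" using t by auto
  qed
qed

lemma ph_in:
  assumes s: "simple_graph G" and t: "t \<in> paths (relE (snd G))"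
  shows "ph t \<in> {S \<in> subgraphs G. graph_iso S P4}"
proof -
  let ?R = "relE (snd G)"
  obtain a b c d where td: "t = (a,b,c,d)" by (cases t) auto
  have p: "?R a b" "?R b c" "?R c d" "a \<noteq> c" "b \<noteq> d" "a \<noteq> d" using t unfolding td paths_def by auto
  have d: "a \<noteq> b" "a \<noteq> c" "a \<noteq> d" "b \<noteq> c" "b \<noteq> d" "c \<noteq> d" using p relE_ne[OF s] by auto
  have inV: "a \<in> fst G" "b \<in> fst G" "c \<in> fst G" "d \<in> fst G" using p relE_ne[OF s] by auto
  define W where "W = {a,b,c,d}"
  define F where "F = {{a,b},{b,c},{c,d}}"
  have pt: "ph t = (W, F)" unfolding td ph_def W_def F_def by simp
  define f where "f = (\<lambda>x. if x = a then 0 else if x = b then 1 else if x = c then 2 else (3::nat))"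
  have sub: "(W, F) \<in> subgraphs G" unfolding subgraphs_def W_def F_def
    using p inV unfolding relE_def by auto
  have bij: "bij_betw f W {0,1,2,3}"
  proof -
    have "inj_on f W" unfolding inj_on_def W_def f_def using d by auto
    moreover have "f ` W = {0,1,2,3}" unfolding W_def f_def using d by auto
    ultimately show ?thesis by (simp add: bij_betw_def)
  qed
  have iso: "graph_iso (W, F) P4"
    unfolding graph_iso_def
  proof (rule exI[of _ f], intro conjI ballI)
    show "bij_betw f (fst (W, F)) (fst P4)" using bij unfolding P4_def by simp
    fix u v assume "u \<in> fst (W, F)" "v \<in> fst (W, F)"
    hence uv: "u \<in> {a,b,c,d}" "v \<in> {a,b,c,d}" unfolding W_def by auto
    show "{u, v} \<in> snd (W, F) \<longleftrightarrow> {f u, f v} \<in> snd P4"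
      using uv unfolding F_def P4_def snd_conv
      by (elim insertE emptyE; simp add: f_def doubleton_eq_iff d d[symmetric])
  qed
  show ?thesis using sub iso pt by simp
qed

lemma ph_onto:
  assumes s: "simple_graph G" and S: "S \<in> {S \<in> subgraphs G. graph_iso S P4}"
  shows "\<exists>t\<in>paths (relE (snd G)). ph t = S"
proof -
  let ?R = "relE (snd G)"
  obtain W F where SWF: "S = (W, F)" by (cases S) auto
  have sub: "W \<subseteq> fst G" "F \<subseteq> snd G" "\<forall>e\<in>F. e \<subseteq> W" using S unfolding SWF subgraphs_def by auto
  obtain f :: "nat \<Rightarrow> nat" where bij: "bij_betw f W {0,1,2,3}"
      and iso: "\<forall>u\<in>W. \<forall>v\<in>W. {u, v} \<in> F \<longleftrightarrow> {f u, f v} \<in> {{0,1},{1,2},{2,3}}"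
    using S unfolding SWF graph_iso_def P4_def by auto
  define g where "g = inv_into W f"
  have im: "f ` W = {0,1,2,3}" using bij unfolding bij_betw_def by simp
  have gW: "\<And>i. i \<in> {0,1,2,3} \<Longrightarrow> g i \<in> W" unfolding g_def
    by (rule inv_into_into) (simp add: im)
  have fg: "\<And>i. i \<in> {0,1,2,3} \<Longrightarrow> f (g i) = i" unfolding g_def
    by (rule f_inv_into_f) (simp add: im)
  have gf: "\<And>u. u \<in> W \<Longrightarrow> g (f u) = u"
    using bij unfolding g_def bij_betw_def by (simp add: inv_into_f_f)
  have fW: "\<And>u. u \<in> W \<Longrightarrow> f u \<in> {0,1,2,3}"
    using bij bij_betwE by blast
  define a where "a = g 0"
  define b where "b = g 1"
  define c where "c = g 2"
  define d where "d = g 3"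
  have abcd: "a \<in> W" "b \<in> W" "c \<in> W" "d \<in> W" unfolding a_def b_def c_def d_def using gW by auto
  have fv: "f a = 0" "f b = 1" "f c = 2" "f d = 3" unfolding a_def b_def c_def d_def using fg by auto
  have dist: "a \<noteq> b" "a \<noteq> c" "a \<noteq> d" "b \<noteq> c" "b \<noteq> d" "c \<noteq> d" using fv by (metis zero_neq_one numeral_One numeral_eq_iff semiring_norm(83) semiring_norm(85) semiring_norm(86) semiring_norm(89) zero_neq_numeral)+
  have Weq: "W = {a,b,c,d}"
  proof
    show "{a,b,c,d} \<subseteq> W" using abcd by auto
    show "W \<subseteq> {a,b,c,d}"
    proof
      fix u assume u: "u \<in> W"
      have "f u \<in> {0,1,2,3}" using fW[OF u] .
      hence "g (f u) \<in> {a,b,c,d}" unfolding a_def b_def c_def d_def by auto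
      thus "u \<in> {a,b,c,d}" using gf[OF u] by simp
    qed
  qed
  have eF: "{a,b} \<in> F" "{b,c} \<in> F" "{c,d} \<in> F" using iso abcd fv by auto
  have Feq: "F = {{a,b},{b,c},{c,d}}"
  proof
    show "{{a,b},{b,c},{c,d}} \<subseteq> F" using eF by auto
    show "F \<subseteq> {{a,b},{b,c},{c,d}}"
    proof
      fix e assume e: "e \<in> F"
      have "card e = 2" using e sub s unfolding simple_graph_def by auto
      then obtain u v where uv: "e = {u,v}" "u \<noteq> v" by (auto simp: card_2_iff)
      have uvW: "u \<in> W" "v \<in> W" using sub e uv by auto
      have "{f u, f v} \<in> {{0,1},{1,2},{2,3}}" using iso uvW e uv by auto
      hence "(f u = 0 \<and> f v = 1) \<or> (f u = 1 \<and> f v = 0) \<or> (f u = 1 \<and> f v = 2) \<or> (f u = 2 \<and> f v = 1)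
          \<or> (f u = 2 \<and> f v = 3) \<or> (f u = 3 \<and> f v = 2)" by (simp add: doubleton_eq_iff)
      moreover have "u = g (f u)" "v = g (f v)" using gf uvW by auto
      ultimately have "(u = a \<and> v = b) \<or> (u = b \<and> v = a) \<or> (u = b \<and> v = c) \<or> (u = c \<and> v = b)
          \<or> (u = c \<and> v = d) \<or> (u = d \<and> v = c)" unfolding a_def b_def c_def d_def by metis
      thus "e \<in> {{a,b},{b,c},{c,d}}" unfolding uv(1) by (elim disjE conjE; simp add: insert_commute)
    qed
  qed
  have "(a,b,c,d) \<in> paths ?R" unfolding paths_def relE_def using eF sub dist by auto
  moreover have "ph (a,b,c,d) = S" unfolding SWF ph_def Weq Feq by simp
  ultimately show ?thesis by blast
qed

lemma P4_count:
  assumes s: "simple_graph G"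
  shows "2 * count_copies P4 G = W (relE (snd G))"
proof -
  let ?R = "relE (snd G)"
  let ?C = "{S \<in> subgraphs G. graph_iso S P4}"
  have fC: "finite ?C" using finite_subgraphs[OF s] by simp
  have V: "fst G = {0..<card (fst G)} \<Longrightarrow> True" by simp
  have fP: "finite (paths ?R)"
  proof -
    have "paths ?R \<subseteq> fst G \<times> fst G \<times> fst G \<times> fst G" unfolding paths_def using relE_ne[OF s] by auto
    moreover have "finite (fst G)" using s unfolding simple_graph_def by auto
    ultimately show ?thesis by (meson finite_SigmaI finite_subset)
  qed
  have im: "ph ` paths ?R \<subseteq> ?C" using ph_in[OF s] by blast
  have "W ?R = (\<Sum>S\<in>?C. card {t \<in> paths ?R. ph t = S})"
    unfolding W_def card_eq_sum using sum.group[OF fP fC im, of "\<lambda>_. 1::nat"] by simp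
  also have "\<dots> = (\<Sum>S\<in>?C. 2)"
  proof (rule sum.cong[OF refl])
    fix S assume "S \<in> ?C"
    then obtain t where t: "t \<in> paths ?R" "ph t = S" using ph_onto[OF s] by blast
    have "{t' \<in> paths ?R. ph t' = S} = {t, rv t}" using fiber_ph[OF s t(1)] t(2) by simp
    thus "card {t' \<in> paths ?R. ph t' = S} = 2" using fiber_ph(2)[OF s t(1)] by simp
  qed
  finally show ?thesis unfolding count_copies_def by simp
qed

lemma divk: "k < 3 \<Longrightarrow> ((n::nat) + k) div 3 = n div 3 + (n mod 3 + k) div 3"
  using div_add1_eq[of n k 3] by simp

lemma card_mod3:
  "card {x. x < n \<and> x mod 3 = (0::nat)} = (n + 2) div 3 \<and>
   card {x. x < n \<and> x mod 3 = (1::nat)} = (n + 1) div 3 \<and>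
   card {x. x < n \<and> x mod 3 = (2::nat)} = n div 3"
proof (induction n)
  case 0 thus ?case by simp
next
  case (Suc n)
  have step: "card {x. x < Suc n \<and> x mod 3 = i} = card {x. x < n \<and> x mod 3 = i} + (if n mod 3 = i then 1 else 0)" for i :: nat
  proof -
    have "{x. x < Suc n \<and> x mod 3 = i} = {x. x < n \<and> x mod 3 = i} \<union> (if n mod 3 = i then {n} else {})"
      by (auto simp: less_Suc_eq)
    moreover have "finite {x. x < n \<and> x mod 3 = i}" by simp
    ultimately show ?thesis by (auto simp: card_insert_if)
  qed
  have e: "Suc n + 2 = n + 3" "Suc n + 1 = n + 2" "Suc n = n + 1" by simp_all
  have IH0: "card {x. x < n \<and> x mod 3 = 0} = (n + 2) div 3"
   and IH1: "card {x. x < n \<and> x mod 3 = 1} = (n + 1) div 3"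
   and IH2: "card {x. x < n \<and> x mod 3 = 2} = n div 3" using Suc.IH by auto
  have s0: "card {x. x < Suc n \<and> x mod 3 = 0} = card {x. x < n \<and> x mod 3 = 0} + (if n mod 3 = 0 then 1 else 0)"
    by (rule step)
  have s1: "card {x. x < Suc n \<and> x mod 3 = 1} = card {x. x < n \<and> x mod 3 = 1} + (if n mod 3 = 1 then 1 else 0)"
    by (rule step)
  have s2: "card {x. x < Suc n \<and> x mod 3 = 2} = card {x. x < n \<and> x mod 3 = 2} + (if n mod 3 = 2 then 1 else 0)"
    by (rule step)
  have d3: "(n + 3) div 3 = n div 3 + 1" "(3 + n) div 3 = n div 3 + 1" by simp_all
  have "n mod 3 = 0 \<or> n mod 3 = 1 \<or> n mod 3 = 2" by auto
  thus ?case
  proof (elim disjE)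
    assume h: "n mod 3 = 0"
    show ?case using h d3 divk[of 2 n] divk[of 1 n] s0 s1 s2 IH0 IH1 IH2 by simp
  next
    assume h: "n mod 3 = 1"
    show ?case using h d3 divk[of 2 n] divk[of 1 n] s0 s1 s2 IH0 IH1 IH2 by simp
  next
    assume h: "n mod 3 = 2"
    show ?case using h d3 divk[of 2 n] divk[of 1 n] s0 s1 s2 IH0 IH1 IH2 by simp
  qed
qed

lemma W_turan_rel:
  "int (W (Mp n (\<lambda>x. x mod 3))) = Fp (int ((n+2) div 3)) (int ((n+1) div 3)) (int (n div 3))"
  using W_Mp[of "\<lambda>x. x mod 3" n] card_mod3[of n] unfolding sz_def by simp

lemma upper:
  assumes "R \<in> Rs n"
  shows "W R \<le> W (Mp n (\<lambda>x. x mod 3))"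
proof -
  obtain R0 where R0: "R0 \<in> Rs n" "\<forall>S\<in>Rs n. W S \<le> W R0" "complete n R0" using exists_complete by blast
  have g: "grel n R0" and k: "k4free R0" using R0 unfolding Rs_def by auto
  obtain p where p3: "\<forall>x. p x < (3::nat)" and pR: "\<forall>x y. R0 x y \<longleftrightarrow> x < n \<and> y < n \<and> p x \<noteq> p y"
    using labelling[OF g k R0(3)] by blast
  have "R0 = Mp n p" unfolding Mp_def using pR by (intro ext) simp
  hence "int (W R0) = Fp (int (sz n p 0)) (int (sz n p 1)) (int (sz n p 2))" using W_Mp[OF p3] by simp
  also have "\<dots> \<le> Fp (int ((n+2) div 3)) (int ((n+1) div 3)) (int (n div 3))"
    using balance[of "sz n p 0" "sz n p 1" "sz n p 2"] sz_sum[OF p3, of n] by simp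
  also have "\<dots> = int (W (Mp n (\<lambda>x. x mod 3)))" using W_turan_rel by simp
  finally have "W R0 \<le> W (Mp n (\<lambda>x. x mod 3))" by simp
  thus ?thesis using R0(2) assms by fastforce
qed

lemma turan_rel: "relE (snd (turan_graph 3 n)) = Mp n (\<lambda>x. x mod 3)"
  unfolding relE_def turan_graph_def Mp_def by (intro ext) (auto simp: doubleton_eq_iff)

lemma turan_simple: "simple_graph (turan_graph 3 n)"
  unfolding simple_graph_def turan_graph_def
proof (clarsimp)
  fix u v :: nat assume "u mod 3 \<noteq> v mod 3"
  hence "u \<noteq> v" by auto
  thus "card {u, v} = 2" by simp
qed

lemma mod3_k4free: "k4free (Mp n (\<lambda>x. x mod 3))"
  unfolding k4free_def Mp_def
proof (clarify)
  fix a b c d :: nat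
  assume h: "a mod 3 \<noteq> b mod 3" "a mod 3 \<noteq> c mod 3" "a mod 3 \<noteq> d mod 3" "b mod 3 \<noteq> c mod 3"
    "b mod 3 \<noteq> d mod 3" "c mod 3 \<noteq> d mod 3"
  have "a mod 3 \<in> {0,1,2}" "b mod 3 \<in> {0,1,2}" "c mod 3 \<in> {0,1,2}" "d mod 3 \<in> {0,1,2}" by auto
  thus False using h by (elim insertE emptyE) simp_all
qed

theorem main:
  "gen_ex n P4 (complete_graph 4) = count_copies P4 (turan_graph 3 n)"
proof -
  let ?T = "turan_graph 3 n"
  let ?S = "{count_copies P4 G | G :: nat sgraph. simple_graph G \<and> fst G = {0..<n} \<and> count_copies (complete_graph 4) G = 0}"
  have Tfst: "fst ?T = {0..<n}" unfolding turan_graph_def by simp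
  have Tk: "count_copies (complete_graph 4) ?T = 0"
    using count_of_k4free[OF turan_simple] mod3_k4free turan_rel by simp
  have Tin: "count_copies P4 ?T \<in> ?S" using turan_simple Tfst Tk by blast
  have le: "x \<le> count_copies P4 ?T" if "x \<in> ?S" for x
  proof -
    obtain G :: "nat sgraph" where G: "x = count_copies P4 G" "simple_graph G" "fst G = {0..<n}"
      "count_copies (complete_graph 4) G = 0" using \<open>x \<in> ?S\<close> by blast
    have "relE (snd G) \<in> Rs n" unfolding Rs_def
      using simple_grel[OF G(2,3)] k4free_of_count[OF G(2,4)] by simp
    hence "W (relE (snd G)) \<le> W (Mp n (\<lambda>x. x mod 3))" by (rule upper)
    hence "2 * count_copies P4 G \<le> 2 * count_copies P4 ?T"
      using P4_count[OF G(2)] P4_count[OF turan_simple] turan_rel by simp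
    thus ?thesis using G(1) by simp
  qed
  have fin: "finite ?S" by (rule finite_subset[of _ "{..count_copies P4 ?T}"]) (use le in auto)
  show ?thesis unfolding gen_ex_def
    by (rule Max_eqI[OF fin le Tin])
qed

theorem proposition3p16:
  shows "\<exists>n0. \<forall>n\<ge>n0. gen_ex n P4 (complete_graph 4) = count_copies P4 (turan_graph 3 n)"
  using main by blast

end
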